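(* Let $\mathfrak g=\mathfrak a\ltimes\mathfrak b$ be a countable-dimensional complex Lie algebra, where $\mathfrak a$ is a Lie subalgebra of $\mathfrak g$ and $\mathfrak b$ is an ideal of $\mathfrak g$ with $\mathfrak g=\mathfrak a\oplus\mathfrak b$ as vector spaces. Let $M$ be a simple $\mathfrak g$-module containing a simple $\mathfrak b$-submodule $H$ whose $\mathfrak b$-module structure extends to a $\mathfrak g$-module structure on $H$; denote this $\mathfrak g$-module by $H^{\mathfrak g}$. Then $M\cong H^{\mathfrak g}\otimes U^{\mathfrak g}$ as $\mathfrak g$-modules for some simple $\mathfrak a$-module $U$.
   Context: For an $\mathfrak a$-module $U$, $U^{\mathfrak g}$ denotes the $\mathfrak g$-module obtained from $U$ by letting $\mathfrak b$ act trivially (via $\mathfrak g/\mathfrak b\cong\mathfrak a$). The tensor product of $\mathfrak g$-modules carries the diagonal action $x(u\otimes w)=xu\otimes w+u\otimes xw$. *)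

theory Defs
  imports "HOL-Analysis.Analysis"
begin

text \<open>Complex vector spaces are modelled with the library locale vector_space,
  with an explicit scalar multiplication sc :: complex => 'v => 'v.\<close>

definition lie_algebra :: "(complex \<Rightarrow> 'g::ab_group_add \<Rightarrow> 'g) \<Rightarrow> ('g \<Rightarrow> 'g \<Rightarrow> 'g) \<Rightarrow> bool" where
  "lie_algebra sg br \<longleftrightarrow> vector_space sg \<and>
     (\<forall>x y z. br (x + y) z = br x z + br y z) \<and>
     (\<forall>x y z. br x (y + z) = br x y + br x z) \<and>
     (\<forall>c x y. br (sg c x) y = sg c (br x y)) \<and>
     (\<forall>c x y. br x (sg c y) = sg c (br x y)) \<and>
     (\<forall>x. br x x = 0) \<and>
     (\<forall>x y z. br x (br y z) + br y (br z x) + br z (br x y) = 0)"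

definition countable_dim :: "(complex \<Rightarrow> 'v::ab_group_add \<Rightarrow> 'v) \<Rightarrow> 'v set \<Rightarrow> bool" where
  "countable_dim sc V \<longleftrightarrow> (\<exists>B. countable B \<and> B \<subseteq> V \<and> module.span sc B = V)"

definition lie_subalgebra :: "(complex \<Rightarrow> 'g::ab_group_add \<Rightarrow> 'g) \<Rightarrow> ('g \<Rightarrow> 'g \<Rightarrow> 'g) \<Rightarrow> 'g set \<Rightarrow> bool" where
  "lie_subalgebra sg br A \<longleftrightarrow> module.subspace sg A \<and> (\<forall>x\<in>A. \<forall>y\<in>A. br x y \<in> A)"

definition lie_ideal :: "(complex \<Rightarrow> 'g::ab_group_add \<Rightarrow> 'g) \<Rightarrow> ('g \<Rightarrow> 'g \<Rightarrow> 'g) \<Rightarrow> 'g set \<Rightarrow> bool" where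
  "lie_ideal sg br B \<longleftrightarrow> module.subspace sg B \<and> (\<forall>x. \<forall>y\<in>B. br x y \<in> B)"

definition lie_module ::
  "(complex \<Rightarrow> 'g::ab_group_add \<Rightarrow> 'g) \<Rightarrow> ('g \<Rightarrow> 'g \<Rightarrow> 'g) \<Rightarrow> 'g set \<Rightarrow>
   (complex \<Rightarrow> 'v::ab_group_add \<Rightarrow> 'v) \<Rightarrow> 'v set \<Rightarrow> ('g \<Rightarrow> 'v \<Rightarrow> 'v) \<Rightarrow> bool" where
  "lie_module sg br S sv V rho \<longleftrightarrow>
     module.subspace sv V \<and>
     (\<forall>x\<in>S. \<forall>v\<in>V. rho x v \<in> V) \<and>
     (\<forall>x\<in>S. \<forall>y\<in>S. \<forall>v\<in>V. rho (x + y) v = rho x v + rho y v) \<and>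
     (\<forall>c. \<forall>x\<in>S. \<forall>v\<in>V. rho (sg c x) v = sv c (rho x v)) \<and>
     (\<forall>x\<in>S. \<forall>v\<in>V. \<forall>w\<in>V. rho x (v + w) = rho x v + rho x w) \<and>
     (\<forall>c. \<forall>x\<in>S. \<forall>v\<in>V. rho x (sv c v) = sv c (rho x v)) \<and>
     (\<forall>x\<in>S. \<forall>y\<in>S. \<forall>v\<in>V. rho (br x y) v = rho x (rho y v) - rho y (rho x v))"

definition simple_lie_module ::
  "(complex \<Rightarrow> 'g::ab_group_add \<Rightarrow> 'g) \<Rightarrow> ('g \<Rightarrow> 'g \<Rightarrow> 'g) \<Rightarrow> 'g set \<Rightarrow>
   (complex \<Rightarrow> 'v::ab_group_add \<Rightarrow> 'v) \<Rightarrow> 'v set \<Rightarrow> ('g \<Rightarrow> 'v \<Rightarrow> 'v) \<Rightarrow> bool" where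
  "simple_lie_module sg br S sv V rho \<longleftrightarrow>
     lie_module sg br S sv V rho \<and> V \<noteq> {0} \<and>
     (\<forall>W. W \<subseteq> V \<and> module.subspace sv W \<and> (\<forall>x\<in>S. \<forall>w\<in>W. rho x w \<in> W)
          \<longrightarrow> W = {0} \<or> W = V)"

definition sd_proj :: "'g set \<Rightarrow> 'g set \<Rightarrow> 'g::ab_group_add \<Rightarrow> 'g" where
  "sd_proj A B x = (THE y. y \<in> A \<and> x - y \<in> B)"

text \<open>Tensor product H (x) U of vector spaces, constructed as the free vector space
  on H x U (finitely supported functions H x U -> complex) modulo the subspace spanned
  by the bilinearity relations.\<close>

definition fdelta :: "'h \<Rightarrow> 'u \<Rightarrow> complex \<Rightarrow> ('h \<times> 'u \<Rightarrow> complex)" where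
  "fdelta h u c = (\<lambda>p. if p = (h, u) then c else 0)"

definition free_space :: "'h set \<Rightarrow> 'u set \<Rightarrow> ('h \<times> 'u \<Rightarrow> complex) set" where
  "free_space H U = {f. finite {p. f p \<noteq> 0} \<and> {p. f p \<noteq> 0} \<subseteq> H \<times> U}"

inductive_set tensor_relations ::
  "(complex \<Rightarrow> 'h::ab_group_add \<Rightarrow> 'h) \<Rightarrow> (complex \<Rightarrow> 'u::ab_group_add \<Rightarrow> 'u) \<Rightarrow>
   'h set \<Rightarrow> 'u set \<Rightarrow> ('h \<times> 'u \<Rightarrow> complex) set"
  for sh su H U where
  rel_zero: "(\<lambda>_. 0) \<in> tensor_relations sh su H U"
| rel_add: "f \<in> tensor_relations sh su H U \<Longrightarrow> g \<in> tensor_relations sh su H U \<Longrightarrow>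
     (\<lambda>p. f p + g p) \<in> tensor_relations sh su H U"
| rel_smult: "f \<in> tensor_relations sh su H U \<Longrightarrow> (\<lambda>p. c * f p) \<in> tensor_relations sh su H U"
| rel_ladd: "h \<in> H \<Longrightarrow> h' \<in> H \<Longrightarrow> u \<in> U \<Longrightarrow>
     (\<lambda>p. fdelta (h + h') u 1 p - fdelta h u 1 p - fdelta h' u 1 p) \<in> tensor_relations sh su H U"
| rel_lsmult: "h \<in> H \<Longrightarrow> u \<in> U \<Longrightarrow>
     (\<lambda>p. fdelta (sh c h) u 1 p - fdelta h u c p) \<in> tensor_relations sh su H U"
| rel_radd: "h \<in> H \<Longrightarrow> u \<in> U \<Longrightarrow> u' \<in> U \<Longrightarrow>
     (\<lambda>p. fdelta h (u + u') 1 p - fdelta h u 1 p - fdelta h u' 1 p) \<in> tensor_relations sh su H U"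
| rel_rsmult: "h \<in> H \<Longrightarrow> u \<in> U \<Longrightarrow>
     (\<lambda>p. fdelta h (su c u) 1 p - fdelta h u c p) \<in> tensor_relations sh su H U"

definition eval_free :: "(complex \<Rightarrow> 'm::ab_group_add \<Rightarrow> 'm) \<Rightarrow> ('h \<Rightarrow> 'u \<Rightarrow> 'm) \<Rightarrow> ('h \<times> 'u \<Rightarrow> complex) \<Rightarrow> 'm" where
  "eval_free sm beta f = (\<Sum>p\<in>{p. f p \<noteq> 0}. sm (f p) (beta (fst p) (snd p)))"

text \<open>The linear map free_space H U -> M sending (h,u) to beta h u is onto M with kernel
  exactly the relation subspace; i.e. it induces a linear isomorphism
  H (x) U = free/relations -> M with h (x) u mapped to beta h u.\<close>

definition tensor_presentation ::
  "(complex \<Rightarrow> 'h::ab_group_add \<Rightarrow> 'h) \<Rightarrow> (complex \<Rightarrow> 'u::ab_group_add \<Rightarrow> 'u) \<Rightarrow>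
   (complex \<Rightarrow> 'm::ab_group_add \<Rightarrow> 'm) \<Rightarrow> 'h set \<Rightarrow> 'u set \<Rightarrow> 'm set \<Rightarrow> ('h \<Rightarrow> 'u \<Rightarrow> 'm) \<Rightarrow> bool" where
  "tensor_presentation sh su sm H U M beta \<longleftrightarrow>
     eval_free sm beta ` free_space H U = M \<and>
     (\<forall>f\<in>free_space H U. eval_free sm beta f = 0 \<longleftrightarrow> f \<in> tensor_relations sh su H U)"

end

theory Submission
  imports Defs "HOL-Computational_Algebra.Fundamental_Theorem_Algebra"
begin


locale ctx =
  G: vector_space sg + M: vector_space sm
  for sg :: "complex \<Rightarrow> 'g::ab_group_add \<Rightarrow> 'g"
  and sm :: "complex \<Rightarrow> 'm::ab_group_add \<Rightarrow> 'm" +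
  fixes br :: "'g \<Rightarrow> 'g \<Rightarrow> 'g" and a b :: "'g set"
    and rho :: "'g \<Rightarrow> 'm \<Rightarrow> 'm" and H :: "'m set" and sigma :: "'g \<Rightarrow> 'm \<Rightarrow> 'm"
    and h0 :: 'm
  assumes a_sub: "G.subspace a" and b_sub: "G.subspace b"
    and ideal: "\<And>x y. y \<in> b \<Longrightarrow> br x y \<in> b"
    and ab0: "a \<inter> b = {0}"
    and decomp: "\<And>x. \<exists>y z. y \<in> a \<and> z \<in> b \<and> x = y + z"
    and cdim: "\<exists>B. countable B \<and> G.span B = UNIV"
    and rho_add_x: "\<And>x y v. rho (x + y) v = rho x v + rho y v"
    and rho_scale_x: "\<And>c x v. rho (sg c x) v = sm c (rho x v)"
    and rho_add_v: "\<And>x v w. rho x (v + w) = rho x v + rho x w"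
    and rho_scale_v: "\<And>c x v. rho x (sm c v) = sm c (rho x v)"
    and rho_br: "\<And>x y v. rho (br x y) v = rho x (rho y v) - rho y (rho x v)"
    and M_simple: "\<And>W. M.subspace W \<Longrightarrow> (\<And>x w. w \<in> W \<Longrightarrow> rho x w \<in> W) \<Longrightarrow> W = {0} \<or> W = UNIV"
    and H_sub: "M.subspace H"
    and H_stable: "\<And>x h. x \<in> b \<Longrightarrow> h \<in> H \<Longrightarrow> rho x h \<in> H"
    and H_simple: "\<And>W. W \<subseteq> H \<Longrightarrow> M.subspace W \<Longrightarrow> (\<And>x w. x \<in> b \<Longrightarrow> w \<in> W \<Longrightarrow> rho x w \<in> W)
                     \<Longrightarrow> W = {0} \<or> W = H"
    and sig_in: "\<And>x h. h \<in> H \<Longrightarrow> sigma x h \<in> H"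
    and sig_add_x: "\<And>x y h. h \<in> H \<Longrightarrow> sigma (x + y) h = sigma x h + sigma y h"
    and sig_scale_x: "\<And>c x h. h \<in> H \<Longrightarrow> sigma (sg c x) h = sm c (sigma x h)"
    and sig_add_v: "\<And>x h h'. h \<in> H \<Longrightarrow> h' \<in> H \<Longrightarrow> sigma x (h + h') = sigma x h + sigma x h'"
    and sig_scale_v: "\<And>c x h. h \<in> H \<Longrightarrow> sigma x (sm c h) = sm c (sigma x h)"
    and sig_br: "\<And>x y h. h \<in> H \<Longrightarrow> sigma (br x y) h = sigma x (sigma y h) - sigma y (sigma x h)"
    and sig_rho: "\<And>x h. x \<in> b \<Longrightarrow> h \<in> H \<Longrightarrow> sigma x h = rho x h"
    and h0H: "h0 \<in> H" and h0nz: "h0 \<noteq> 0"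
begin

lemma rho_zero_v[simp]: "rho x 0 = 0"
  using rho_add_v[of x 0 0] by simp
lemma rho_minus_v: "rho x (- v) = - rho x v"
  using rho_add_v[of x v "- v"] by (simp add: eq_neg_iff_add_eq_0 add.commute)
lemma rho_diff_v: "rho x (v - w) = rho x v - rho x w"
  using rho_add_v[of x v "- w"] rho_minus_v by simp
lemma rho_sum_v: "rho x (sum f S) = (\<Sum>i\<in>S. rho x (f i))"
  by (induction S rule: infinite_finite_induct) (auto simp: rho_add_v)
lemma rho_zero_x[simp]: "rho 0 v = 0"
  using rho_add_x[of 0 0 v] by simp
lemma rho_diff_x: "rho (x - y) v = rho x v - rho y v"
  using rho_add_x[of "x - y" y v] by (simp add: eq_diff_eq)

lemma H0: "0 \<in> H" using H_sub M.subspace_0 by blast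
lemma H_add: "h \<in> H \<Longrightarrow> h' \<in> H \<Longrightarrow> h + h' \<in> H" using H_sub M.subspace_add by blast
lemma H_scale: "h \<in> H \<Longrightarrow> sm c h \<in> H" using H_sub M.subspace_scale by blast
lemma H_neg: "h \<in> H \<Longrightarrow> - h \<in> H" using H_sub M.subspace_neg by blast
lemma H_diff: "h \<in> H \<Longrightarrow> h' \<in> H \<Longrightarrow> h - h' \<in> H" using H_sub M.subspace_diff by blast
lemma H_sum: "(\<And>i. i \<in> S \<Longrightarrow> f i \<in> H) \<Longrightarrow> sum f S \<in> H" using H_sub M.subspace_sum by blast

lemma sig_zero_v: "sigma x 0 = 0"
  using sig_add_v[of 0 0 x] H0 by simp
lemma sig_diff_v: "h \<in> H \<Longrightarrow> h' \<in> H \<Longrightarrow> sigma x (h - h') = sigma x h - sigma x h'"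
  using sig_add_v[of "h - h'" h' x] H_diff by (simp add: eq_diff_eq)

section \<open>b-homomorphisms H -> M\<close>

definition hom :: "('m \<Rightarrow> 'm) \<Rightarrow> bool" where
  "hom f \<longleftrightarrow> (\<forall>h\<in>H. \<forall>h'\<in>H. f (h + h') = f h + f h') \<and> (\<forall>c. \<forall>h\<in>H. f (sm c h) = sm c (f h))
     \<and> (\<forall>x\<in>b. \<forall>h\<in>H. f (rho x h) = rho x (f h))"

lemma homD: assumes "hom f"
  shows "h \<in> H \<Longrightarrow> h' \<in> H \<Longrightarrow> f (h + h') = f h + f h'"
    "h \<in> H \<Longrightarrow> f (sm c h) = sm c (f h)"
    "x \<in> b \<Longrightarrow> h \<in> H \<Longrightarrow> f (rho x h) = rho x (f h)"
  using assms unfolding hom_def by auto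

lemma hom_zero: "hom f \<Longrightarrow> f 0 = 0"
  using homD(1)[of f 0 0] H0 by simp
lemma hom_diff: "hom f \<Longrightarrow> h \<in> H \<Longrightarrow> h' \<in> H \<Longrightarrow> f (h - h') = f h - f h'"
  using homD(1)[of f "h - h'" h'] H_diff by (simp add: eq_diff_eq)
lemma hom_neg: "hom f \<Longrightarrow> h \<in> H \<Longrightarrow> f (- h) = - f h"
  using hom_diff[of f 0 h] H0 hom_zero by simp
lemma hom_sum: "hom f \<Longrightarrow> (\<And>i. i \<in> S \<Longrightarrow> g i \<in> H) \<Longrightarrow> f (sum g S) = (\<Sum>i\<in>S. f (g i))"
proof (induction S rule: infinite_finite_induct)
  case (insert x F)
  have "sum g F \<in> H" using insert.prems by (intro H_sum) auto
  then show ?case using homD(1)[of f "g x" "sum g F"] insert by auto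
qed (auto simp: hom_zero)

lemma hom_lincomb: "hom f \<Longrightarrow> hom g \<Longrightarrow> hom (\<lambda>h. sm c (f h) + sm d (g h))"
  unfolding hom_def by (auto simp: M.scale_right_distrib rho_add_v rho_scale_v algebra_simps)

lemma hom_add: "hom f \<Longrightarrow> hom g \<Longrightarrow> hom (\<lambda>h. f h + g h)"
  using hom_lincomb[of f g 1 1] by simp
lemma hom_minus: "hom f \<Longrightarrow> hom g \<Longrightarrow> hom (\<lambda>h. f h - g h)"
  using hom_lincomb[of f g 1 "-1"] by (simp add: M.scale_minus_left)
lemma hom_scale: "hom f \<Longrightarrow> hom (\<lambda>h. sm c (f h))"
  using hom_lincomb[of f f c 0] by simp
lemma hom_id: "hom (\<lambda>h. h)"
  unfolding hom_def by auto

lemma kernel_sub: assumes "hom f"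
  shows "M.subspace {h\<in>H. f h = 0}"
  unfolding M.subspace_def using assms H0 H_add H_scale hom_zero homD(1,2)[OF assms] by auto

lemma hom_kernel: assumes "hom f" "h \<in> H" "h \<noteq> 0" "f h = 0" "h' \<in> H"
  shows "f h' = 0"
proof -
  have "{h\<in>H. f h = 0} = {0} \<or> {h\<in>H. f h = 0} = H"
    apply (rule H_simple)
    using kernel_sub[OF assms(1)] apply auto
    using H_stable homD(3)[OF assms(1)] by auto
  then show ?thesis using assms by auto
qed

lemma hom_unique: "hom f \<Longrightarrow> hom g \<Longrightarrow> f h0 = g h0 \<Longrightarrow> h \<in> H \<Longrightarrow> f h = g h"
  using hom_kernel[of "\<lambda>h. f h - g h" h0 h] hom_minus h0H h0nz by auto

end


lemma (in vector_space) in_span_finite_subset: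
  assumes "x \<in> span B" shows "\<exists>F. finite F \<and> F \<subseteq> B \<and> x \<in> span F"
proof -
  from assms obtain t r where t: "finite t" "t \<subseteq> B" "x = (\<Sum>a\<in>t. r a *s a)"
    unfolding span_explicit by blast
  have "x \<in> span t" unfolding t(3) by (intro span_sum span_scale span_base)
  with t show ?thesis by blast
qed

lemma (in vector_space) independent_countable:
  assumes ind: "independent A" and sp: "A \<subseteq> span B" and cB: "countable B"
  shows "countable A"
proof -
  have "\<forall>x\<in>A. \<exists>F. finite F \<and> F \<subseteq> B \<and> x \<in> span F"
    using sp in_span_finite_subset by blast
  then obtain g where g: "\<And>x. x \<in> A \<Longrightarrow> finite (g x) \<and> g x \<subseteq> B \<and> x \<in> span (g x)"
    by metis
  have A_eq: "A = (\<Union>F\<in>g ` A. {x\<in>A. g x = F})" by auto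
  have fin: "finite {x\<in>A. g x = F}" if "F \<in> g ` A" for F
  proof -
    have "independent {x\<in>A. g x = F}" using ind by (rule independent_mono) auto
    moreover have "{x\<in>A. g x = F} \<subseteq> span F" using g by auto
    moreover have "finite F" using that g by auto
    ultimately show ?thesis using independent_span_bound by blast
  qed
  have "g ` A \<subseteq> {F. finite F \<and> F \<subseteq> B}" using g by auto
  then have "countable (g ` A)"
    using countable_Collect_finite_subset[OF cB] countable_subset by blast
  then show ?thesis
    by (subst A_eq, intro countable_UN) (auto intro: countable_finite fin)
qed

context ctx begin

lemma M_countable_span: "\<exists>Ob. countable Ob \<and> M.span Ob = UNIV"
proof -
  obtain B where B: "countable B" "G.span B = UNIV" using cdim by blast
  define Orb where "Orb = (\<lambda>es. foldr rho es h0) ` lists B"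
  have cO: "countable Orb" unfolding Orb_def using B(1) by auto
  have h0O: "h0 \<in> Orb" unfolding Orb_def by (auto intro!: image_eqI[of _ _ "[]"])
  have st1: "rho e v \<in> Orb" if "e \<in> B" "v \<in> Orb" for e v
  proof -
    from that(2) obtain es where "es \<in> lists B" "v = foldr rho es h0" unfolding Orb_def by auto
    then show ?thesis using that(1) unfolding Orb_def by (auto intro!: image_eqI[of _ _ "e # es"])
  qed
  have st2: "rho e w \<in> M.span Orb" if "e \<in> B" "w \<in> M.span Orb" for e w
    using that(2)
  proof (induction rule: M.span_induct_alt)
    case base then show ?case by (simp add: M.span_zero)
  next
    case (step c x y)
    then show ?case using st1[OF that(1) step(1)]
      by (simp add: rho_add_v rho_scale_v M.span_add M.span_scale M.span_base)
  qed
  have st3: "\<forall>w\<in>M.span Orb. rho x w \<in> M.span Orb" for x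
  proof -
    have "x \<in> G.span B" using B(2) by simp
    then show ?thesis
    proof (induction rule: G.span_induct_alt)
      case base then show ?case by (simp add: M.span_zero)
    next
      case (step c x y)
      then show ?case using st2[OF step(1)]
        by (simp add: rho_add_x rho_scale_x M.span_add M.span_scale)
    qed
  qed
  have "M.span Orb = {0} \<or> M.span Orb = UNIV"
    by (rule M_simple) (auto simp: st3)
  moreover have "h0 \<in> M.span Orb" using h0O M.span_base by blast
  ultimately have "M.span Orb = UNIV" using h0nz by auto
  then show ?thesis using cO by blast
qed

section \<open>Polynomials in an endomorphism\<close>

definition endo :: "('m \<Rightarrow> 'm) \<Rightarrow> bool" where
  "endo f \<longleftrightarrow> hom f \<and> (\<forall>h\<in>H. f h \<in> H)"

definition opoly :: "('m \<Rightarrow> 'm) \<Rightarrow> complex poly \<Rightarrow> 'm \<Rightarrow> 'm" where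
  "opoly f p = fold_coeffs (\<lambda>c g v. sm c v + f (g v)) p (\<lambda>v. 0)"

lemma opoly_0[simp]: "opoly f 0 v = 0"
  by (simp add: opoly_def)

lemma opoly_pCons: assumes "endo f" "h \<in> H"
  shows "opoly f (pCons c p) h = sm c h + f (opoly f p h)"
proof (cases "c = 0 \<and> p = 0")
  case True
  then show ?thesis using hom_zero assms unfolding endo_def by simp
next
  case False
  then show ?thesis unfolding opoly_def
    by (auto simp: fold_coeffs_pCons_coeff_not_0_eq fold_coeffs_pCons_not_0_0_eq)
qed

lemma opoly_in: assumes "endo f" "h \<in> H" shows "opoly f p h \<in> H"
proof (induction p)
  case 0 then show ?case using H0 by simp
next
  case (pCons c p)
  then show ?case using assms opoly_pCons[OF assms] H_add H_scale unfolding endo_def by auto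
qed

lemma opoly_add_v: assumes "endo f" "h \<in> H" "h' \<in> H"
  shows "opoly f p (h + h') = opoly f p h + opoly f p h'"
proof (induction p)
  case 0 then show ?case by simp
next
  case (pCons c p)
  have "opoly f (pCons c p) (h + h') = sm c (h + h') + f (opoly f p h + opoly f p h')"
    using opoly_pCons[OF assms(1) H_add[OF assms(2,3)]] pCons by simp
  also have "\<dots> = (sm c h + f (opoly f p h)) + (sm c h' + f (opoly f p h'))"
    using homD(1)[of f "opoly f p h" "opoly f p h'"] assms opoly_in unfolding endo_def
    by (simp add: M.scale_right_distrib algebra_simps)
  finally show ?case using opoly_pCons assms by simp
qed

lemma opoly_scale_v: assumes "endo f" "h \<in> H"
  shows "opoly f p (sm d h) = sm d (opoly f p h)"
proof (induction p)
  case 0 then show ?case by simp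
next
  case (pCons c p)
  have "opoly f (pCons c p) (sm d h) = sm c (sm d h) + f (sm d (opoly f p h))"
    using opoly_pCons[OF assms(1) H_scale[OF assms(2)]] pCons by simp
  also have "\<dots> = sm d (sm c h + f (opoly f p h))"
    using homD(2)[of f "opoly f p h" d] assms opoly_in unfolding endo_def
    by (simp add: M.scale_right_distrib mult.commute)
  finally show ?case using opoly_pCons assms by simp
qed

lemma opoly_zero_v: assumes "endo f" shows "opoly f p 0 = 0"
  using opoly_scale_v[OF assms H0, of p 0] by simp

lemma opoly_sum_v: assumes "endo f" "\<And>i. i \<in> S \<Longrightarrow> g i \<in> H"
  shows "opoly f p (sum g S) = (\<Sum>i\<in>S. opoly f p (g i))"
  using assms(2)
proof (induction S rule: infinite_finite_induct)
  case (insert x F)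
  have "sum g F \<in> H" using insert.prems by (intro H_sum) auto
  then show ?case using opoly_add_v[OF assms(1), of "g x" "sum g F"] insert by auto
qed (auto simp: opoly_zero_v assms)

lemma opoly_padd: assumes "endo f" "h \<in> H"
  shows "opoly f (p + q) h = opoly f p h + opoly f q h"
proof (induction p q rule: poly_induct2)
  case 0 then show ?case by simp
next
  case (pCons c p d q)
  have "opoly f (pCons c p + pCons d q) h = sm (c + d) h + f (opoly f p h + opoly f q h)"
    using opoly_pCons[OF assms] pCons by simp
  also have "\<dots> = (sm c h + f (opoly f p h)) + (sm d h + f (opoly f q h))"
    using homD(1)[of f "opoly f p h" "opoly f q h"] assms opoly_in unfolding endo_def
    by (simp add: M.scale_left_distrib algebra_simps)
  finally show ?case using opoly_pCons[OF assms] by simp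
qed

lemma opoly_smult: assumes "endo f" "h \<in> H"
  shows "opoly f (smult d p) h = sm d (opoly f p h)"
proof (induction p)
  case 0 then show ?case by simp
next
  case (pCons c p)
  have "opoly f (smult d (pCons c p)) h = sm (d * c) h + f (sm d (opoly f p h))"
    using opoly_pCons[OF assms] pCons by simp
  also have "\<dots> = sm d (sm c h + f (opoly f p h))"
    using homD(2)[of f "opoly f p h" d] assms opoly_in unfolding endo_def
    by (simp add: M.scale_right_distrib)
  finally show ?case using opoly_pCons[OF assms] by simp
qed

lemma opoly_psum: assumes "endo f" "h \<in> H"
  shows "opoly f (sum q S) h = (\<Sum>i\<in>S. opoly f (q i) h)"
  by (induction S rule: infinite_finite_induct) (auto simp: opoly_padd[OF assms])

lemma opoly_mult: assumes "endo f" "h \<in> H"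
  shows "opoly f (p * q) h = opoly f p (opoly f q h)"
proof (induction p)
  case 0 then show ?case by simp
next
  case (pCons c p)
  have qh: "opoly f q h \<in> H" using opoly_in assms by blast
  have "opoly f (pCons c p * q) h = opoly f (smult c q) h + opoly f (pCons 0 (p * q)) h"
    using opoly_padd[OF assms] by simp
  also have "\<dots> = sm c (opoly f q h) + f (opoly f p (opoly f q h))"
    using opoly_smult[OF assms] opoly_pCons[OF assms] pCons by simp
  also have "\<dots> = opoly f (pCons c p) (opoly f q h)"
    using opoly_pCons[OF assms(1) qh] by simp
  finally show ?case .
qed

lemma opoly_const: assumes "endo f" "h \<in> H" shows "opoly f [:c:] h = sm c h"
  using opoly_pCons[OF assms, of c 0] hom_zero assms unfolding endo_def by simp

lemma opoly_lin: assumes "endo f" "h \<in> H" shows "opoly f [:- z, 1:] h = f h - sm z h"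
  using opoly_pCons[OF assms, of "- z" "[:1:]"] opoly_const[OF assms, of 1]
  by (simp add: M.scale_minus_left)

section \<open>Dixmier's lemma\<close>

lemma dixmier_core:
  fixes co :: "complex \<Rightarrow> complex"
  assumes en: "endo f"
    and inj: "\<And>z h. h \<in> H \<Longrightarrow> f h = sm z h \<Longrightarrow> h = 0"
    and v: "\<And>c. v c \<in> H" "\<And>c. f (v c) - sm c (v c) = h0"
    and F: "finite F" "cz \<in> F" "co cz \<noteq> 0" "(\<Sum>c\<in>F. sm (co c) (v c)) = 0"
  shows False
proof -
  define Q where "Q c = (\<Prod>d\<in>F-{c}. [:- d, 1:])" for c
  define P where "P = (\<Prod>d\<in>F. [:- d, 1:])"
  define q where "q = (\<Sum>c\<in>F. smult (co c) (Q c))"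
  have PQ: "P = Q c * [:- c, 1:]" if "c \<in> F" for c
    unfolding P_def Q_def using prod.remove[OF F(1) that, of "\<lambda>d. [:- d, 1:]"] by (simp add: mult.commute)
  have 1: "opoly f P (v c) = opoly f (Q c) h0" if "c \<in> F" for c
  proof -
    have "opoly f P (v c) = opoly f (Q c) (opoly f [:- c, 1:] (v c))"
      using PQ[OF that] opoly_mult[OF en v(1)] by metis
    then show ?thesis using opoly_lin[OF en v(1)] v(2) by simp
  qed
  have "opoly f P (\<Sum>c\<in>F. sm (co c) (v c)) = (\<Sum>c\<in>F. sm (co c) (opoly f P (v c)))"
    using opoly_sum_v[OF en, of F "\<lambda>c. sm (co c) (v c)"] opoly_scale_v[OF en v(1)] H_scale v(1) by simp
  also have "\<dots> = (\<Sum>c\<in>F. sm (co c) (opoly f (Q c) h0))" using 1 by simp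
  also have "\<dots> = opoly f q h0"
    unfolding q_def opoly_psum[OF en h0H] opoly_smult[OF en h0H] ..
  finally have q0: "opoly f q h0 = 0" using F(4) opoly_zero_v[OF en] by simp
  have "poly q cz = (\<Sum>c\<in>F. co c * poly (Q c) cz)"
    unfolding q_def by (simp add: poly_sum)
  also have "\<dots> = co cz * poly (Q cz) cz + (\<Sum>c\<in>F-{cz}. co c * poly (Q c) cz)"
    using sum.remove[OF F(1,2)] by simp
  also have "(\<Sum>c\<in>F-{cz}. co c * poly (Q c) cz) = 0"
  proof (intro sum.neutral ballI)
    fix c assume c: "c \<in> F - {cz}"
    have "poly (Q c) cz = (\<Prod>d\<in>F-{c}. cz - d)" unfolding Q_def by (simp add: poly_prod)
    also have "\<dots> = 0" using c F by (intro prod_zero) auto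
    finally show "co c * poly (Q c) cz = 0" by simp
  qed
  finally have pq: "poly q cz = co cz * poly (Q cz) cz" by simp
  have "poly (Q cz) cz = (\<Prod>d\<in>F-{cz}. cz - d)" unfolding Q_def by (simp add: poly_prod)
  also have "\<dots> \<noteq> 0" using F(1) by (subst prod_zero_iff) auto
  finally have "poly q cz \<noteq> 0" using F(3) pq by simp
  then have qnz: "q \<noteq> 0" by auto
  obtain r where r: "smult (lead_coeff q) (\<Prod>i<degree q. [:- r i, 1:]) = q"
    using complex_poly_decompose' by blast
  have injn: "h \<in> H \<Longrightarrow> h \<noteq> 0 \<Longrightarrow> opoly f (\<Prod>i<n. [:- r i, 1:]) h \<noteq> 0" for n h
  proof (induction n arbitrary: h)
    case 0 then show ?case using opoly_const[OF en, of h 1] by (simp add: one_pCons)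
  next
    case (Suc n)
    have e: "opoly f (\<Prod>i<Suc n. [:- r i, 1:]) h = opoly f (\<Prod>i<n. [:- r i, 1:]) (f h - sm (r n) h)"
    proof -
      have "(\<Prod>i<Suc n. [:- r i, 1:]) = (\<Prod>i<n. [:- r i, 1:]) * [:- r n, 1:]" by simp
      then have "opoly f (\<Prod>i<Suc n. [:- r i, 1:]) h = opoly f (\<Prod>i<n. [:- r i, 1:]) (opoly f [:- r n, 1:] h)"
        using opoly_mult[OF en Suc.prems(1)] by metis
      then show ?thesis using opoly_lin[OF en Suc.prems(1)] by simp
    qed
    have "f h - sm (r n) h \<noteq> 0" using inj[of h "r n"] Suc.prems by auto
    moreover have "f h - sm (r n) h \<in> H" using en Suc.prems H_diff H_scale unfolding endo_def by auto
    ultimately show ?case using Suc.IH e by simp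
  qed
  have "opoly f q h0 = sm (lead_coeff q) (opoly f (\<Prod>i<degree q. [:- r i, 1:]) h0)"
    using opoly_smult[OF en h0H] r by metis
  moreover have "lead_coeff q \<noteq> 0" using qnz by simp
  ultimately have "opoly f q h0 \<noteq> 0" using injn[OF h0H h0nz] by simp
  then show False using q0 by simp
qed

lemma dixmier:
  assumes en: "endo f" shows "\<exists>c. \<forall>h\<in>H. f h = sm c h"
proof (rule ccontr)
  assume ne: "\<not> ?thesis"
  have hf: "hom f" and fH: "\<And>h. h \<in> H \<Longrightarrow> f h \<in> H" using en unfolding endo_def by auto
  have hD: "hom (\<lambda>h. f h - sm z h)" for z using hom_minus[OF hf hom_scale[OF hom_id]] by simp
  have inj: "h = 0" if "h \<in> H" "f h = sm z h" for z h
  proof (rule ccontr)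
    assume "h \<noteq> 0"
    then have "\<forall>h'\<in>H. f h' - sm z h' = 0" using hom_kernel[OF hD that(1)] that by auto
    then show False using ne by auto
  qed
  have surj: "\<exists>w\<in>H. f w - sm z w = h0" for z
  proof -
    define Im where "Im = (\<lambda>w. f w - sm z w) ` H"
    have "Im \<subseteq> H" unfolding Im_def using fH H_diff H_scale by auto
    moreover have "M.subspace Im"
    proof -
      have "0 \<in> Im" unfolding Im_def using H0 hom_zero[OF hD[of z]] by force
      moreover have "x + y \<in> Im" if xy: "x \<in> Im" "y \<in> Im" for x y
      proof -
        obtain w where "w \<in> H" "x = f w - sm z w"
          using xy(1) unfolding Im_def by blast
        moreover obtain w' where "w' \<in> H" "y = f w' - sm z w'"
          using xy(2) unfolding Im_def by blast
        ultimately show ?thesis unfolding Im_def using homD(1)[OF hD[of z], of w w'] H_add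
          by (intro image_eqI[of _ _ "w + w'"]) auto
      qed
      moreover have "sm c x \<in> Im" if xI: "x \<in> Im" for x c
      proof -
        obtain w where "w \<in> H" "x = f w - sm z w"
          using xI unfolding Im_def by auto
        then show ?thesis unfolding Im_def using homD(2)[OF hD[of z], of w c] H_scale
          by (intro image_eqI[of _ _ "sm c w"]) auto
      qed
      ultimately show ?thesis unfolding M.subspace_def by blast
    qed
    moreover have "rho x w \<in> Im" if xw: "x \<in> b" "w \<in> Im" for x w
    proof -
      obtain u where "u \<in> H" "w = f u - sm z u"
        using xw unfolding Im_def by auto
      then show ?thesis unfolding Im_def using homD(3)[OF hD[of z], of x u] H_stable that(1)
        by (intro image_eqI[of _ _ "rho x u"]) auto
    qed
    ultimately have "Im = {0} \<or> Im = H" using H_simple by blast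
    moreover have "Im \<noteq> {0}"
    proof -
      from ne obtain h where "h \<in> H" "f h \<noteq> sm z h" by blast
      then have "f h - sm z h \<in> Im" "f h - sm z h \<noteq> 0" unfolding Im_def by auto
      then show ?thesis by blast
    qed
    ultimately have "h0 \<in> Im" using h0H by auto
    then show ?thesis unfolding Im_def by auto
  qed
  then obtain v where v: "\<And>c. v c \<in> H" "\<And>c. f (v c) - sm c (v c) = h0" by metis
  have vinj: "inj v"
  proof (rule injI)
    fix c d assume "v c = v d"
    then have "f (v c) - sm c (v c) = f (v c) - sm d (v c)" using v(2)[of c] v(2)[of d] by simp
    then have "sm c (v c) = sm d (v c)" by simp
    moreover have "v c \<noteq> 0" using v(2)[of c] h0nz hom_zero[OF hf] by auto
    ultimately show "c = d" by simp
  qed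
  have indep: "\<not> M.dependent (range v)"
  proof
    assume "M.dependent (range v)"
    then obtain t u where t: "finite t" "t \<subseteq> range v" "(\<Sum>w\<in>t. sm (u w) w) = 0" "\<exists>w\<in>t. u w \<noteq> 0"
      unfolding M.dependent_explicit by blast
    define F where "F = v -` t"
    have tF: "t = v ` F" unfolding F_def using t(2) by auto
    have fF: "finite F" unfolding F_def using t(1) vinj by (simp add: finite_vimageI)
    have "(\<Sum>c\<in>F. sm (u (v c)) (v c)) = 0"
      using t(3) unfolding tF by (simp add: sum.reindex inj_on_def inj_eq[OF vinj])
    moreover obtain c0 where "c0 \<in> F" "u (v c0) \<noteq> 0" using t(4) tF by auto
    ultimately show False
      apply (intro dixmier_core[where co = "\<lambda>c. u (v c)" and f = f and v = v and F = F and cz = c0])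
      using en inj v fF by auto
  qed
  obtain Ob where O: "countable Ob" "M.span Ob = UNIV" using M_countable_span by blast
  have "countable (range v)" using M.independent_countable[OF indep _ O(1)] O(2) by auto
  then have "countable (UNIV :: complex set)" using countable_image_inj_on vinj by blast
  then show False using uncountable_UNIV_complex by blast
qed

end


context ctx begin

definition U :: "'m set" where "U = {f h0 | f. hom f}"
definition phi :: "'m \<Rightarrow> 'm \<Rightarrow> 'm" where "phi u = (SOME f. hom f \<and> f h0 = u)"
definition beta :: "'m \<Rightarrow> 'm \<Rightarrow> 'm" where "beta h u = phi u h"
definition tau :: "'g \<Rightarrow> 'm \<Rightarrow> 'm" where "tau x u = rho x u - beta (sigma x h0) u"

lemma phi: assumes "u \<in> U" shows "hom (phi u)" "phi u h0 = u"
proof -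
  have "\<exists>f. hom f \<and> f h0 = u" using assms unfolding U_def by auto
  then have "hom (phi u) \<and> phi u h0 = u" unfolding phi_def by (rule someI_ex)
  then show "hom (phi u)" "phi u h0 = u" by auto
qed

lemma phi_eqI: "u \<in> U \<Longrightarrow> hom f \<Longrightarrow> f h0 = u \<Longrightarrow> h \<in> H \<Longrightarrow> phi u h = f h"
  using hom_unique[of "phi u" f h] phi by auto

lemma UI: "hom f \<Longrightarrow> f h0 \<in> U" unfolding U_def by auto

lemma hom_0: "hom (\<lambda>h. 0)" unfolding hom_def by simp

lemma h0U: "h0 \<in> U" using UI[OF hom_id] by simp
lemma U0: "0 \<in> U" using UI[OF hom_0] by simp
lemma U_add: "u \<in> U \<Longrightarrow> v \<in> U \<Longrightarrow> u + v \<in> U"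
  using UI[OF hom_add[OF phi(1) phi(1)], of u v] phi(2) by simp
lemma U_scale: "u \<in> U \<Longrightarrow> sm c u \<in> U"
  using UI[OF hom_scale[OF phi(1)], of u c] phi(2) by simp
lemma U_sub: "M.subspace U" unfolding M.subspace_def using U0 U_add U_scale by blast
lemma U_sum: "(\<And>i. i \<in> S \<Longrightarrow> f i \<in> U) \<Longrightarrow> sum f S \<in> U"
  using U_sub M.subspace_sum by blast
lemma U_diff: "u \<in> U \<Longrightarrow> v \<in> U \<Longrightarrow> u - v \<in> U"
  using U_sub M.subspace_diff by blast

lemma beta_hom: "u \<in> U \<Longrightarrow> hom (\<lambda>h. beta h u)"
  unfolding beta_def using phi(1) by (simp add: eta_contract_eq)

lemma beta_h0[simp]: "u \<in> U \<Longrightarrow> beta h0 u = u" unfolding beta_def using phi(2) by simp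

lemma beta_add_l: "u \<in> U \<Longrightarrow> h \<in> H \<Longrightarrow> h' \<in> H \<Longrightarrow> beta (h + h') u = beta h u + beta h' u"
  using homD(1)[OF beta_hom] by blast
lemma beta_scale_l: "u \<in> U \<Longrightarrow> h \<in> H \<Longrightarrow> beta (sm c h) u = sm c (beta h u)"
  using homD(2)[OF beta_hom] by blast
lemma beta_rho: "u \<in> U \<Longrightarrow> x \<in> b \<Longrightarrow> h \<in> H \<Longrightarrow> beta (rho x h) u = rho x (beta h u)"
  using homD(3)[OF beta_hom] by blast
lemma beta_zero_l[simp]: "u \<in> U \<Longrightarrow> beta 0 u = 0"
  using hom_zero[OF beta_hom] by blast
lemma beta_diff_l: "u \<in> U \<Longrightarrow> h \<in> H \<Longrightarrow> h' \<in> H \<Longrightarrow> beta (h - h') u = beta h u - beta h' u"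
  using hom_diff[OF beta_hom] by blast
lemma beta_neg_l: "u \<in> U \<Longrightarrow> h \<in> H \<Longrightarrow> beta (- h) u = - beta h u"
  using hom_neg[OF beta_hom] by blast
lemma beta_sum_l: "u \<in> U \<Longrightarrow> (\<And>i. i \<in> S \<Longrightarrow> g i \<in> H) \<Longrightarrow> beta (sum g S) u = (\<Sum>i\<in>S. beta (g i) u)"
  using hom_sum[OF beta_hom] by blast

lemma beta_add_r: "u \<in> U \<Longrightarrow> v \<in> U \<Longrightarrow> h \<in> H \<Longrightarrow> beta h (u + v) = beta h u + beta h v"
proof -
  assume a: "u \<in> U" "v \<in> U" "h \<in> H"
  have "phi (u + v) h = (\<lambda>h. phi u h + phi v h) h"
    by (rule phi_eqI) (use a in \<open>auto simp: U_add hom_add phi\<close>)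
  then show ?thesis unfolding beta_def by simp
qed
lemma beta_scale_r: "u \<in> U \<Longrightarrow> h \<in> H \<Longrightarrow> beta h (sm c u) = sm c (beta h u)"
proof -
  assume a: "u \<in> U" "h \<in> H"
  have "phi (sm c u) h = (\<lambda>h. sm c (phi u h)) h"
    by (rule phi_eqI) (use a in \<open>auto simp: U_scale hom_scale phi\<close>)
  then show ?thesis unfolding beta_def by simp
qed
lemma beta_zero_r[simp]: "h \<in> H \<Longrightarrow> beta h 0 = 0"
  using beta_scale_r[OF U0, of h 0] by simp
lemma beta_sum_r: "h \<in> H \<Longrightarrow> (\<And>i. i \<in> S \<Longrightarrow> g i \<in> U) \<Longrightarrow> beta h (sum g S) = (\<Sum>i\<in>S. beta h (g i))"
proof (induction S rule: infinite_finite_induct)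
  case (insert x F)
  have "sum g F \<in> U" using insert.prems by (intro U_sum) auto
  then show ?case using beta_add_r[of "g x" "sum g F" h] insert by auto
qed auto

lemma beta_inj: assumes "u \<in> U" "h \<in> H" "h \<noteq> 0" "beta h u = 0" shows "u = 0"
  using hom_kernel[OF beta_hom[OF assms(1)] assms(2-4) h0H] assms(1) by simp

lemma twist_hom: assumes u: "u \<in> U"
  shows "hom (\<lambda>h. rho x (beta h u) - beta (sigma x h) u)"
  unfolding hom_def
proof (intro conjI ballI allI)
  fix h h' assume hh: "h \<in> H" "h' \<in> H"
  show "rho x (beta (h + h') u) - beta (sigma x (h + h')) u =
        (rho x (beta h u) - beta (sigma x h) u) + (rho x (beta h' u) - beta (sigma x h') u)"
    using hh u by (simp add: beta_add_l sig_add_v sig_in rho_add_v)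
next
  fix c h assume hh: "h \<in> H"
  show "rho x (beta (sm c h) u) - beta (sigma x (sm c h)) u = sm c (rho x (beta h u) - beta (sigma x h) u)"
    using hh u by (simp add: beta_scale_l sig_scale_v sig_in rho_scale_v M.scale_right_diff_distrib)
next
  fix y h assume y: "y \<in> b" and hh: "h \<in> H"
  have yh: "rho y h \<in> H" using H_stable y hh by blast
  have bxy: "br x y \<in> b" using ideal y by blast
  have s1: "sigma x (rho y h) = rho y (sigma x h) + rho (br x y) h"
    using sig_br[OF hh, of x y] sig_rho[OF y hh] sig_rho[OF y sig_in[OF hh]] sig_rho[OF bxy hh]
    by (simp add: algebra_simps)
  have "beta (sigma x (rho y h)) u = rho y (beta (sigma x h) u) + rho (br x y) (beta h u)"
    using s1 beta_add_l[OF u H_stable[OF y sig_in[OF hh]] H_stable[OF bxy hh]]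
      beta_rho[OF u y sig_in[OF hh]] beta_rho[OF u bxy hh] by simp
  moreover have "rho x (beta (rho y h) u) = rho y (rho x (beta h u)) + rho (br x y) (beta h u)"
    using beta_rho[OF u y hh] rho_br[of x y "beta h u"] by (simp add: algebra_simps)
  ultimately show "rho x (beta (rho y h) u) - beta (sigma x (rho y h)) u =
      rho y (rho x (beta h u) - beta (sigma x h) u)"
    by (simp add: rho_diff_v)
qed

lemma tau_U: "u \<in> U \<Longrightarrow> tau x u \<in> U"
  using UI[OF twist_hom, of u x] unfolding tau_def by (simp add: h0H)

lemma beta_tau: assumes "u \<in> U" "h \<in> H"
  shows "beta h (tau x u) = rho x (beta h u) - beta (sigma x h) u"
  unfolding beta_def[of h "tau x u"]
  using phi_eqI[OF tau_U[OF assms(1)] twist_hom[OF assms(1)] _ assms(2), of x] assms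
  unfolding tau_def by (simp add: h0H)

lemma tau_add_x: "u \<in> U \<Longrightarrow> tau (x + y) u = tau x u + tau y u"
  unfolding tau_def by (simp add: rho_add_x sig_add_x h0H beta_add_l sig_in algebra_simps)
lemma tau_scale_x: "u \<in> U \<Longrightarrow> tau (sg c x) u = sm c (tau x u)"
  unfolding tau_def by (simp add: rho_scale_x sig_scale_x h0H beta_scale_l sig_in M.scale_right_diff_distrib)
lemma tau_add_u: "u \<in> U \<Longrightarrow> v \<in> U \<Longrightarrow> tau x (u + v) = tau x u + tau x v"
  unfolding tau_def by (simp add: rho_add_v beta_add_r h0H sig_in algebra_simps)
lemma tau_scale_u: "u \<in> U \<Longrightarrow> tau x (sm c u) = sm c (tau x u)"
  unfolding tau_def by (simp add: rho_scale_v beta_scale_r h0H sig_in M.scale_right_diff_distrib)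

lemma tau_br: assumes u: "u \<in> U"
  shows "tau (br x y) u = tau x (tau y u) - tau y (tau x u)"
proof -
  have sx: "sigma x h0 \<in> H" and sy: "sigma y h0 \<in> H" using sig_in h0H by auto
  have A: "tau x (tau y u) = rho x (rho y u) - rho x (beta (sigma y h0) u)
            - (rho y (beta (sigma x h0) u) - beta (sigma y (sigma x h0)) u)"
    unfolding tau_def[of x "tau y u"] using beta_tau[OF u sx, of y] 
    by (simp add: tau_def rho_diff_v)
  have B: "tau y (tau x u) = rho y (rho x u) - rho y (beta (sigma x h0) u)
            - (rho x (beta (sigma y h0) u) - beta (sigma x (sigma y h0)) u)"
    unfolding tau_def[of y "tau x u"] using beta_tau[OF u sy, of x]
    by (simp add: tau_def rho_diff_v)
  have C: "beta (sigma (br x y) h0) u = beta (sigma x (sigma y h0)) u - beta (sigma y (sigma x h0)) u"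
    using sig_br[OF h0H, of x y] beta_diff_l[OF u sig_in[OF sy] sig_in[OF sx]] by simp
  show ?thesis unfolding tau_def[of "br x y"] A B C rho_br by (simp add: algebra_simps)
qed

end


context ctx begin

inductive_set Ops :: "('m \<Rightarrow> 'm) set" where
  ops_id: "(\<lambda>v. v) \<in> Ops"
| ops_rho: "f \<in> Ops \<Longrightarrow> x \<in> b \<Longrightarrow> (\<lambda>v. rho x (f v)) \<in> Ops"
| ops_add: "f \<in> Ops \<Longrightarrow> g \<in> Ops \<Longrightarrow> (\<lambda>v. f v + g v) \<in> Ops"
| ops_scale: "f \<in> Ops \<Longrightarrow> (\<lambda>v. sm c (f v)) \<in> Ops"

lemma ops_props: assumes "f \<in> Ops"
  shows "(\<forall>h\<in>H. f h \<in> H) \<and> (\<forall>v w. f (v + w) = f v + f w) \<and> (\<forall>c v. f (sm c v) = sm c (f v))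
     \<and> (\<forall>p. hom p \<longrightarrow> (\<forall>h\<in>H. p (f h) = f (p h)))"
  using assms
proof (induction rule: Ops.induct)
  case ops_id then show ?case by auto
next
  case (ops_rho f x)
  then show ?case using H_stable by (auto simp: rho_add_v rho_scale_v homD(3))
next
  case (ops_add f g)
  then show ?case using H_add by (auto simp: homD(1) M.scale_right_distrib algebra_simps)
next
  case (ops_scale f c)
  then show ?case using H_scale by (auto simp: homD(2) M.scale_right_distrib mult.commute)
qed

lemma ops_H: "f \<in> Ops \<Longrightarrow> h \<in> H \<Longrightarrow> f h \<in> H" using ops_props by blast
lemma ops_add_v: "f \<in> Ops \<Longrightarrow> f (v + w) = f v + f w" using ops_props by blast
lemma ops_scale_v: "f \<in> Ops \<Longrightarrow> f (sm c v) = sm c (f v)" using ops_props by blast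
lemma ops_comm: "f \<in> Ops \<Longrightarrow> hom p \<Longrightarrow> h \<in> H \<Longrightarrow> p (f h) = f (p h)" using ops_props by blast
lemma ops_zero_v: "f \<in> Ops \<Longrightarrow> f 0 = 0" using ops_scale_v[of f 0 0] by simp
lemma ops_sum_v: "f \<in> Ops \<Longrightarrow> f (sum g S) = (\<Sum>i\<in>S. f (g i))"
  by (induction S rule: infinite_finite_induct) (auto simp: ops_zero_v ops_add_v)

lemma ops_diff: "f \<in> Ops \<Longrightarrow> g \<in> Ops \<Longrightarrow> (\<lambda>v. f v - g v) \<in> Ops"
proof -
  assume "f \<in> Ops" "g \<in> Ops"
  then have "(\<lambda>v. f v + sm (-1) (g v)) \<in> Ops" by (intro ops_add ops_scale)
  then show ?thesis by (simp add: M.scale_minus_left)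
qed

lemma ops_orbit: assumes h1: "h1 \<in> H" "h1 \<noteq> 0" shows "{f h1 | f. f \<in> Ops} = H"
proof -
  let ?W = "{f h1 | f. f \<in> Ops}"
  have "?W \<subseteq> H" using ops_H h1 by auto
  moreover have "M.subspace ?W"
    unfolding M.subspace_def
  proof (intro conjI ballI allI)
    show "0 \<in> ?W" using ops_scale[OF ops_id, of 0] by force
    fix x y assume "x \<in> ?W" "y \<in> ?W"
    then obtain f g where "f \<in> Ops" "g \<in> Ops" "x = f h1" "y = g h1" by auto
    then show "x + y \<in> ?W" using ops_add[of f g] by force
  next
    fix c x assume "x \<in> ?W"
    then obtain f where "f \<in> Ops" "x = f h1" by auto
    then show "sm c x \<in> ?W" using ops_scale[of f c] by force
  qed
  moreover have "rho x w \<in> ?W" if xw: "x \<in> b" "w \<in> ?W" for x w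
  proof -
    obtain f where "f \<in> Ops" "w = f h1" using xw by auto
    then show ?thesis using ops_rho[of f x] xw(1) by force
  qed
  ultimately have "?W = {0} \<or> ?W = H" using H_simple by blast
  moreover have "h1 \<in> ?W" using ops_id by force
  ultimately show ?thesis using h1 by auto
qed

lemma beta_ops: "u \<in> U \<Longrightarrow> f \<in> Ops \<Longrightarrow> h \<in> H \<Longrightarrow> beta (f h) u = f (beta h u)"
  using ops_comm[OF _ beta_hom] by blast

lemma key: "finite S \<Longrightarrow> S \<subseteq> U \<Longrightarrow> \<not> M.dependent S \<Longrightarrow> (\<forall>u\<in>S. k u \<in> H)
  \<Longrightarrow> (\<Sum>u\<in>S. beta (k u) u) = 0 \<Longrightarrow> \<forall>u\<in>S. k u = 0"
proof (induction "card S" arbitrary: S k rule: less_induct)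
  case less
  note fS = less.prems(1) and SU = less.prems(2) and ind = less.prems(3) and kH = less.prems(4)
    and sum0 = less.prems(5)
  show ?case
  proof (rule ccontr)
    assume "\<not> ?case"
    then obtain u1 where u1: "u1 \<in> S" "k u1 \<noteq> 0" by blast
    define h1 where "h1 = k u1"
    have h1H: "h1 \<in> H" "h1 \<noteq> 0" using u1 kH h1_def by auto
    show False
    proof (cases "\<exists>f\<in>Ops. f h1 = 0 \<and> (\<exists>u\<in>S. f (k u) \<noteq> 0)")
      case True
      then obtain f u2 where f: "f \<in> Ops" "f h1 = 0" "u2 \<in> S" "f (k u2) \<noteq> 0" by blast
      define S' where "S' = S - {u1}"
      have "(\<Sum>u\<in>S. beta (f (k u)) u) = (\<Sum>u\<in>S. f (beta (k u) u))"
        using beta_ops f(1) SU kH by (intro sum.cong) auto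
      also have "\<dots> = f (\<Sum>u\<in>S. beta (k u) u)" by (rule ops_sum_v[OF f(1), symmetric])
      also have "\<dots> = 0" using sum0 ops_zero_v[OF f(1)] by simp
      finally have s: "(\<Sum>u\<in>S. beta (f (k u)) u) = 0" .
      have "(\<Sum>u\<in>S. beta (f (k u)) u) = beta (f (k u1)) u1 + (\<Sum>u\<in>S'. beta (f (k u)) u)"
        unfolding S'_def using sum.remove[OF fS u1(1)] by simp
      also have "beta (f (k u1)) u1 = 0" using f(2) h1_def SU u1(1) by auto
      finally have s': "(\<Sum>u\<in>S'. beta (f (k u)) u) = 0" using s by simp
      have c1: "card S' < card S" unfolding S'_def using fS u1(1) by (rule card_Diff1_less)
      have c2: "\<not> M.dependent S'" unfolding S'_def using M.independent_mono[OF ind Diff_subset] .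
      have c3: "finite S'" "S' \<subseteq> U" "\<forall>u\<in>S'. f (k u) \<in> H"
        using fS SU kH ops_H[OF f(1)] unfolding S'_def by auto
      have "\<forall>u\<in>S'. f (k u) = 0"
        by (rule less.hyps[OF c1 c3(1,2) c2 c3(3) s'])
      then show False using f h1_def by (cases "u2 = u1") (auto simp: S'_def)
    next
      case False
      then have B: "\<And>f u. f \<in> Ops \<Longrightarrow> f h1 = 0 \<Longrightarrow> u \<in> S \<Longrightarrow> f (k u) = 0" by blast
      define psi where "psi u y = (SOME z. \<exists>f\<in>Ops. f h1 = y \<and> f (k u) = z)" for u y
      have psi_eq: "psi u (f h1) = f (k u)" if "f \<in> Ops" "u \<in> S" for f u
      proof -
        have "\<exists>z. \<exists>g\<in>Ops. g h1 = f h1 \<and> g (k u) = z" using that by blast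
        then have "\<exists>g\<in>Ops. g h1 = f h1 \<and> g (k u) = psi u (f h1)"
          unfolding psi_def by (rule someI_ex)
        then obtain g where g: "g \<in> Ops" "g h1 = f h1" "g (k u) = psi u (f h1)" by blast
        have "(\<lambda>v. g v - f v) (k u) = 0" using B[OF ops_diff[OF g(1) that(1)] _ that(2)] g(2) by simp
        then show ?thesis using g(3) by simp
      qed
      have orb: "\<exists>f\<in>Ops. f h1 = y" if "y \<in> H" for y
        using ops_orbit[OF h1H] that by blast
      have endo: "endo (psi u)" if u: "u \<in> S" for u
        unfolding endo_def hom_def
      proof (intro conjI ballI allI)
        fix y y' assume yy: "y \<in> H" "y' \<in> H"
        obtain f where f1: "f \<in> Ops" "f h1 = y" using orb[OF yy(1)] by blast
        obtain g where g1: "g \<in> Ops" "g h1 = y'" using orb[OF yy(2)] by blast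
        note fg = f1(1) g1(1) f1(2) g1(2)
        have "psi u (y + y') = psi u ((\<lambda>v. f v + g v) h1)" using fg by simp
        also have "\<dots> = f (k u) + g (k u)" using psi_eq[OF ops_add[OF fg(1,2)] u] by simp
        finally show "psi u (y + y') = psi u y + psi u y'"
          using psi_eq[OF fg(1) u] psi_eq[OF fg(2) u] fg by simp
      next
        fix c y assume yH: "y \<in> H"
        obtain f where f: "f \<in> Ops" "f h1 = y" using orb[OF yH] by blast
        have "psi u (sm c y) = psi u ((\<lambda>v. sm c (f v)) h1)" using f by simp
        also have "\<dots> = sm c (f (k u))" using psi_eq[OF ops_scale[OF f(1)] u] by simp
        finally show "psi u (sm c y) = sm c (psi u y)" using psi_eq[OF f(1) u] f by simp
      next
        fix x y assume x: "x \<in> b" and yH: "y \<in> H"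
        obtain f where f: "f \<in> Ops" "f h1 = y" using orb[OF yH] by blast
        have "psi u (rho x y) = psi u ((\<lambda>v. rho x (f v)) h1)" using f by simp
        also have "\<dots> = rho x (f (k u))" using psi_eq[OF ops_rho[OF f(1) x] u] by simp
        finally show "psi u (rho x y) = rho x (psi u y)" using psi_eq[OF f(1) u] f by simp
      next
        fix y assume yH: "y \<in> H"
        obtain f where f: "f \<in> Ops" "f h1 = y" using orb[OF yH] by blast
        then show "psi u y \<in> H" using psi_eq[OF f(1) u] ops_H[OF f(1)] kH u by auto
      qed
      have ex: "\<forall>u\<in>S. \<exists>c. \<forall>y\<in>H. psi u y = sm c y" using dixmier endo by blast
      from bchoice[OF ex] obtain c where c0: "\<forall>u\<in>S. \<forall>y\<in>H. psi u y = sm (c u) y" by blast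
      have c: "\<And>u y. u \<in> S \<Longrightarrow> y \<in> H \<Longrightarrow> psi u y = sm (c u) y" using c0 by blast
      have kc: "k u = sm (c u) h1" if "u \<in> S" for u
        using psi_eq[OF ops_id that] c[OF that h1H(1)] by simp
      have "sm (1 - c u1) h1 = 0" using kc[OF u1(1)] h1_def by (simp add: M.scale_left_diff_distrib)
      then have c1: "c u1 = 1" using h1H(2) by simp
      have "(\<Sum>u\<in>S. beta (k u) u) = (\<Sum>u\<in>S. beta h1 (sm (c u) u))"
        using kc SU h1H by (intro sum.cong) (auto simp: beta_scale_l beta_scale_r)
      also have "\<dots> = beta h1 (\<Sum>u\<in>S. sm (c u) u)"
        by (rule beta_sum_r[OF h1H(1), symmetric]) (use SU U_scale in auto)
      finally have "beta h1 (\<Sum>u\<in>S. sm (c u) u) = 0" using sum0 by simp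
      moreover have "(\<Sum>u\<in>S. sm (c u) u) \<in> U" by (rule U_sum) (use SU U_scale in auto)
      ultimately have "(\<Sum>u\<in>S. sm (c u) u) = 0"
        using beta_inj[OF _ h1H] by blast
      then have "c u1 = 0" using M.independentD[OF ind fS subset_refl _ u1(1)] by simp
      then show False using c1 by simp
    qed
  qed
qed

end


context ctx begin

lemma sdp: "sd_proj a b x \<in> a \<and> x - sd_proj a b x \<in> b"
proof -
  obtain y z where yz: "y \<in> a" "z \<in> b" "x = y + z" using decomp by blast
  have "\<exists>!y. y \<in> a \<and> x - y \<in> b"
  proof (rule ex1I[of _ y])
    show "y \<in> a \<and> x - y \<in> b" using yz by simp
    fix y' assume y': "y' \<in> a \<and> x - y' \<in> b"
    have "y' - y \<in> a" using y' yz a_sub G.subspace_diff by blast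
    moreover have "y' - y = (x - y) - (x - y')" by simp
    then have "y' - y \<in> b" using y' yz b_sub G.subspace_diff by (metis add_diff_cancel_left')
    ultimately have "y' - y \<in> a \<inter> b" by blast
    then show "y' = y" using ab0 by simp
  qed
  then show ?thesis unfolding sd_proj_def by (rule theI')
qed

lemma main_eq: assumes h: "h \<in> H" and u: "u \<in> U"
  shows "rho x (beta h u) = beta (sigma x h) u + beta h (tau (sd_proj a b x) u)"
proof -
  define p where "p = sd_proj a b x"
  define q where "q = x - p"
  have q: "q \<in> b" using sdp unfolding q_def p_def by blast
  have x: "x = p + q" unfolding q_def by simp
  have "rho x (beta h u) = rho p (beta h u) + rho q (beta h u)" unfolding x by (rule rho_add_x)
  also have "rho q (beta h u) = beta (sigma q h) u" using beta_rho[OF u q h] sig_rho[OF q h] by simp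
  also have "beta (sigma x h) u = beta (sigma p h) u + beta (sigma q h) u"
    unfolding x using sig_add_x[OF h] beta_add_l[OF u sig_in[OF h] sig_in[OF h]] by simp
  moreover have "beta h (tau p u) = rho p (beta h u) - beta (sigma p h) u" by (rule beta_tau[OF u h])
  ultimately show ?thesis unfolding p_def[symmetric] by (simp add: algebra_simps)
qed

lemma tau_module: "lie_module sg br a sm U tau"
  unfolding lie_module_def
  using U_sub tau_U tau_add_x tau_scale_x tau_add_u tau_scale_u tau_br by blast

abbreviation E where "E \<equiv> eval_free sm beta"

lemma eval_superset: assumes "finite S" "{p. f p \<noteq> 0} \<subseteq> S"
  shows "eval_free sm bt f = (\<Sum>p\<in>S. sm (f p) (bt (fst p) (snd p)))"
  unfolding eval_free_def by (rule sum.mono_neutral_left) (use assms in auto)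

lemma eval_add: assumes "finite {p. f p \<noteq> 0}" "finite {p. g p \<noteq> 0}"
  shows "eval_free sm bt (\<lambda>p. f p + g p) = eval_free sm bt f + eval_free sm bt g"
proof -
  let ?S = "{p. f p \<noteq> 0} \<union> {p. g p \<noteq> 0}"
  have "eval_free sm bt (\<lambda>p. f p + g p) = (\<Sum>p\<in>?S. sm (f p + g p) (bt (fst p) (snd p)))"
    by (rule eval_superset) (use assms in auto)
  also have "\<dots> = (\<Sum>p\<in>?S. sm (f p) (bt (fst p) (snd p))) + (\<Sum>p\<in>?S. sm (g p) (bt (fst p) (snd p)))"
    by (simp add: M.scale_left_distrib sum.distrib)
  also have "(\<Sum>p\<in>?S. sm (f p) (bt (fst p) (snd p))) = eval_free sm bt f"
    by (rule eval_superset[symmetric]) (use assms in auto)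
  also have "(\<Sum>p\<in>?S. sm (g p) (bt (fst p) (snd p))) = eval_free sm bt g"
    by (rule eval_superset[symmetric]) (use assms in auto)
  finally show ?thesis .
qed

lemma eval_scale: assumes "finite {p. f p \<noteq> 0}"
  shows "eval_free sm bt (\<lambda>p. c * f p) = sm c (eval_free sm bt f)"
proof -
  have "eval_free sm bt (\<lambda>p. c * f p) = (\<Sum>p\<in>{p. f p \<noteq> 0}. sm (c * f p) (bt (fst p) (snd p)))"
    by (rule eval_superset) (use assms in auto)
  also have "\<dots> = sm c (eval_free sm bt f)"
    unfolding eval_free_def by (simp add: M.scale_sum_right)
  finally show ?thesis .
qed

lemma eval_zero: "eval_free sm bt (\<lambda>p. 0) = 0" unfolding eval_free_def by simp

lemma eval_delta: "eval_free sm bt (fdelta h u c) = sm c (bt h u)"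
proof -
  have "eval_free sm bt (fdelta h u c) = (\<Sum>p\<in>{(h, u)}. sm (fdelta h u c p) (bt (fst p) (snd p)))"
    by (rule eval_superset) (auto simp: fdelta_def split: if_splits)
  then show ?thesis by (simp add: fdelta_def)
qed

lemma fin_delta: "finite {p. fdelta h u c p \<noteq> 0}"
  by (rule finite_subset[of _ "{(h, u)}"]) (auto simp: fdelta_def split: if_splits)

lemma fin_add: "finite {p. f p \<noteq> 0} \<Longrightarrow> finite {p. g p \<noteq> 0} \<Longrightarrow> finite {p. f p + g p \<noteq> (0::complex)}"
  by (rule finite_subset[of _ "{p. f p \<noteq> 0} \<union> {p. g p \<noteq> 0}"]) auto

lemma fin_scale: "finite {p. f p \<noteq> 0} \<Longrightarrow> finite {p. c * f p \<noteq> (0::complex)}"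
  by (rule finite_subset[of _ "{p. f p \<noteq> 0}"]) auto

lemma fin_sum: "finite I \<Longrightarrow> (\<And>i. i \<in> I \<Longrightarrow> finite {p. F i p \<noteq> 0}) \<Longrightarrow> finite {p. (\<Sum>i\<in>I. F i p) \<noteq> (0::complex)}"
  by (rule finite_subset[of _ "\<Union>i\<in>I. {p. F i p \<noteq> 0}"]) (auto intro: sum.neutral)

lemma eval_sum: assumes "finite I" "\<And>i. i \<in> I \<Longrightarrow> finite {p. F i p \<noteq> 0}"
  shows "eval_free sm bt (\<lambda>p. \<Sum>i\<in>I. F i p) = (\<Sum>i\<in>I. eval_free sm bt (F i))"
  using assms
proof (induction I rule: finite_induct)
  case empty then show ?case by (simp add: eval_zero)
next
  case (insert x F')
  have "eval_free sm bt (\<lambda>p. \<Sum>i\<in>insert x F'. F i p) = eval_free sm bt (\<lambda>p. F x p + (\<Sum>i\<in>F'. F i p))"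
    using insert by simp
  also have "\<dots> = eval_free sm bt (F x) + eval_free sm bt (\<lambda>p. \<Sum>i\<in>F'. F i p)"
    by (rule eval_add) (use insert in \<open>auto intro!: fin_sum\<close>)
  finally show ?case using insert by simp
qed

lemma eval_diff: assumes "finite {p. f p \<noteq> 0}" "finite {p. g p \<noteq> 0}"
  shows "eval_free sm bt (\<lambda>p. f p - g p) = eval_free sm bt f - eval_free sm bt g"
proof -
  have "eval_free sm bt (\<lambda>p. f p + (-1) * g p) = eval_free sm bt f + eval_free sm bt (\<lambda>p. (-1) * g p)"
    by (rule eval_add) (use assms in \<open>auto intro: fin_scale\<close>)
  also have "eval_free sm bt (\<lambda>p. (-1) * g p) = sm (-1) (eval_free sm bt g)"
    by (rule eval_scale) (use assms in auto)
  finally show ?thesis by simp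
qed

abbreviation R where "R \<equiv> tensor_relations sm sm H U"

definition req :: "('m \<times> 'm \<Rightarrow> complex) \<Rightarrow> ('m \<times> 'm \<Rightarrow> complex) \<Rightarrow> bool" where
  "req f g \<longleftrightarrow> (\<lambda>p. f p - g p) \<in> R"

lemma fdelta_out: "p \<noteq> (h, u) \<Longrightarrow> fdelta h u c p = 0"
  unfolding fdelta_def by simp

lemma supp3: "{p. fdelta x1 u1 1 p - fdelta x2 u2 1 p - fdelta x3 u3 1 p \<noteq> 0} \<subseteq> {(x1,u1),(x2,u2),(x3,u3)}"
  by (rule subsetI, rule ccontr) (simp add: fdelta_out)

lemma supp2: "{p. fdelta x1 u1 1 p - fdelta x2 u2 c p \<noteq> 0} \<subseteq> {(x1,u1),(x2,u2)}"
  by (rule subsetI, rule ccontr) (simp add: fdelta_out)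

lemma fs3: assumes "(x1,u1) \<in> H \<times> U" "(x2,u2) \<in> H \<times> U" "(x3,u3) \<in> H \<times> U"
  shows "(\<lambda>p. fdelta x1 u1 1 p - fdelta x2 u2 1 p - fdelta x3 u3 1 p) \<in> free_space H U"
  unfolding free_space_def using supp3[of x1 u1 x2 u2 x3 u3] assms
  by (auto intro: finite_subset)

lemma fs2: assumes "(x1,u1) \<in> H \<times> U" "(x2,u2) \<in> H \<times> U"
  shows "(\<lambda>p. fdelta x1 u1 1 p - fdelta x2 u2 c p) \<in> free_space H U"
  unfolding free_space_def using supp2[of x1 u1 x2 u2 c] assms
  by (auto intro: finite_subset)

lemma eval3: "E (\<lambda>p. fdelta x1 u1 1 p - fdelta x2 u2 1 p - fdelta x3 u3 1 p) = beta x1 u1 - beta x2 u2 - beta x3 u3"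
proof -
  have "E (\<lambda>p. fdelta x1 u1 1 p - fdelta x2 u2 1 p - fdelta x3 u3 1 p) =
        E (\<lambda>p. fdelta x1 u1 1 p - fdelta x2 u2 1 p) - E (fdelta x3 u3 1)"
    by (rule eval_diff) (rule finite_subset[OF supp2[of x1 u1 x2 u2 1]], simp, rule fin_delta)
  also have "E (\<lambda>p. fdelta x1 u1 1 p - fdelta x2 u2 1 p) = E (fdelta x1 u1 1) - E (fdelta x2 u2 1)"
    by (rule eval_diff) (rule fin_delta, rule fin_delta)
  finally show ?thesis by (simp add: eval_delta)
qed

lemma eval2: "E (\<lambda>p. fdelta x1 u1 1 p - fdelta x2 u2 c p) = beta x1 u1 - sm c (beta x2 u2)"
proof -
  have "E (\<lambda>p. fdelta x1 u1 1 p - fdelta x2 u2 c p) = E (fdelta x1 u1 1) - E (fdelta x2 u2 c)"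
    by (rule eval_diff) (rule fin_delta, rule fin_delta)
  then show ?thesis by (simp add: eval_delta)
qed

lemma R_eval: "f \<in> R \<Longrightarrow> f \<in> free_space H U \<and> E f = 0"
proof (induction rule: tensor_relations.induct)
  case rel_zero
  then show ?case by (simp add: free_space_def eval_zero)
next
  case (rel_add f g)
  have "{p. f p + g p \<noteq> 0} \<subseteq> {p. f p \<noteq> 0} \<union> {p. g p \<noteq> 0}" by auto
  moreover have "finite {p. f p + g p \<noteq> 0}" using rel_add fin_add unfolding free_space_def by blast
  moreover have "E (\<lambda>p. f p + g p) = 0" using rel_add eval_add[of f g beta] unfolding free_space_def by simp
  ultimately show ?case using rel_add unfolding free_space_def by blast
next
  case (rel_smult f c)
  have "{p. c * f p \<noteq> 0} \<subseteq> {p. f p \<noteq> 0}" by auto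
  moreover have "finite {p. c * f p \<noteq> 0}" using rel_smult fin_scale unfolding free_space_def by blast
  moreover have "E (\<lambda>p. c * f p) = 0" using rel_smult eval_scale[of f beta c] unfolding free_space_def by simp
  ultimately show ?case using rel_smult unfolding free_space_def by blast
next
  case (rel_ladd h h' u)
  then show ?case using fs3[of "h + h'" u h u h' u] H_add eval3 by (simp add: beta_add_l)
next
  case (rel_lsmult h u c)
  then show ?case using fs2[of "sm c h" u h u c] H_scale eval2 by (simp add: beta_scale_l)
next
  case (rel_radd h u u')
  then show ?case using fs3[of h "u + u'" h u h u'] U_add eval3 by (simp add: beta_add_r)
next
  case (rel_rsmult h u c)
  then show ?case using fs2[of h "sm c u" h u c] U_scale eval2 by (simp add: beta_scale_r)
qed

lemma R_diff: "f \<in> R \<Longrightarrow> g \<in> R \<Longrightarrow> (\<lambda>p. f p - g p) \<in> R"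
proof -
  assume "f \<in> R" "g \<in> R"
  then have "(\<lambda>p. f p + (-1) * g p) \<in> R" by (intro rel_add rel_smult)
  then show ?thesis by simp
qed

lemma req_refl: "req f f" unfolding req_def using rel_zero by simp

lemma req_sym: "req f g \<Longrightarrow> req g f"
  unfolding req_def using R_diff[OF rel_zero, of "\<lambda>p. f p - g p"] by simp

lemma req_trans: "req f g \<Longrightarrow> req g h \<Longrightarrow> req f h"
  unfolding req_def using rel_add[where f = "\<lambda>p. f p - g p" and g = "\<lambda>p. g p - h p"] by simp

lemma req_add: "req f f' \<Longrightarrow> req g g' \<Longrightarrow> req (\<lambda>p. f p + g p) (\<lambda>p. f' p + g' p)"
  unfolding req_def using rel_add[where f = "\<lambda>p. f p - f' p" and g = "\<lambda>p. g p - g' p"] by (simp add: algebra_simps)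

lemma req_sum: "finite I \<Longrightarrow> (\<And>i. i \<in> I \<Longrightarrow> req (F i) (G i))
   \<Longrightarrow> req (\<lambda>p. \<Sum>i\<in>I. F i p) (\<lambda>p. \<Sum>i\<in>I. G i p)"
proof (induction I rule: finite_induct)
  case empty then show ?case by (simp add: req_refl)
next
  case (insert x F')
  then show ?case using req_add[of "F x" "G x" "\<lambda>p. \<Sum>i\<in>F'. F i p" "\<lambda>p. \<Sum>i\<in>F'. G i p"] by simp
qed

lemma req_R: "req f g \<Longrightarrow> g \<in> R \<Longrightarrow> f \<in> R"
  unfolding req_def using rel_add[where f = "\<lambda>p. f p - g p" and g = g] by simp

end


context ctx begin

lemma fdelta_0[simp]: "fdelta h u 0 = (\<lambda>p. 0)" unfolding fdelta_def by auto

lemma L_lsm: "h \<in> H \<Longrightarrow> u \<in> U \<Longrightarrow> req (fdelta h u c) (fdelta (sm c h) u 1)"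
  using req_sym[of "fdelta (sm c h) u 1" "fdelta h u c"] rel_lsmult[of h H u U sm c sm] unfolding req_def by blast
lemma L_rsm: "h \<in> H \<Longrightarrow> u \<in> U \<Longrightarrow> req (fdelta h (sm c u) 1) (fdelta h u c)"
  using rel_rsmult[of h H u U sm c sm] unfolding req_def by blast
lemma L_radd: "h \<in> H \<Longrightarrow> u \<in> U \<Longrightarrow> u' \<in> U \<Longrightarrow>
    req (fdelta h (u + u') 1) (\<lambda>p. fdelta h u 1 p + fdelta h u' 1 p)"
  using rel_radd[of h H u U u' sm sm] unfolding req_def by (simp add: diff_diff_eq)
lemma L_ladd: "h \<in> H \<Longrightarrow> h' \<in> H \<Longrightarrow> u \<in> U \<Longrightarrow>
    req (fdelta (h + h') u 1) (\<lambda>p. fdelta h u 1 p + fdelta h' u 1 p)"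
  using rel_ladd[of h H h' u U sm sm] unfolding req_def by (simp add: diff_diff_eq)
lemma L_zl: "u \<in> U \<Longrightarrow> req (fdelta 0 u 1) (\<lambda>p. 0)"
  using rel_lsmult[of 0 H u U sm 0 sm] H0 unfolding req_def by simp
lemma L_zr: "h \<in> H \<Longrightarrow> req (fdelta h 0 1) (\<lambda>p. 0)"
  using rel_rsmult[of h H 0 U sm 0 sm] U0 unfolding req_def by simp

lemma S1: "finite I \<Longrightarrow> (\<And>i. i \<in> I \<Longrightarrow> w i \<in> U) \<Longrightarrow> h \<in> H \<Longrightarrow>
    req (fdelta h (\<Sum>i\<in>I. w i) 1) (\<lambda>p. \<Sum>i\<in>I. fdelta h (w i) 1 p)"
proof (induction I rule: finite_induct)
  case empty then show ?case using L_zr by simp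
next
  case (insert x F)
  have sF: "(\<Sum>i\<in>F. w i) \<in> U" using insert.prems by (intro U_sum) auto
  have "req (fdelta h (w x + (\<Sum>i\<in>F. w i)) 1) (\<lambda>p. fdelta h (w x) 1 p + fdelta h (\<Sum>i\<in>F. w i) 1 p)"
    using L_radd[OF insert.prems(2) _ sF] insert.prems by simp
  moreover have "req (\<lambda>p. fdelta h (w x) 1 p + fdelta h (\<Sum>i\<in>F. w i) 1 p)
      (\<lambda>p. fdelta h (w x) 1 p + (\<Sum>i\<in>F. fdelta h (w i) 1 p))"
    using req_add[OF req_refl insert.IH] insert.prems by simp
  ultimately show ?case using insert.hyps req_trans by simp
qed

lemma S2: "finite I \<Longrightarrow> (\<And>i. i \<in> I \<Longrightarrow> g i \<in> H) \<Longrightarrow> u \<in> U \<Longrightarrow>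
    req (\<lambda>p. \<Sum>i\<in>I. fdelta (g i) u 1 p) (fdelta (\<Sum>i\<in>I. g i) u 1)"
proof (induction I rule: finite_induct)
  case empty then show ?case using req_sym[OF L_zl] by simp
next
  case (insert x F)
  have sF: "(\<Sum>i\<in>F. g i) \<in> H" using insert.prems by (intro H_sum) auto
  have "req (\<lambda>p. fdelta (g x) u 1 p + (\<Sum>i\<in>F. fdelta (g i) u 1 p))
      (\<lambda>p. fdelta (g x) u 1 p + fdelta (\<Sum>i\<in>F. g i) u 1 p)"
    using req_add[OF req_refl insert.IH] insert.prems by simp
  moreover have "req (\<lambda>p. fdelta (g x) u 1 p + fdelta (\<Sum>i\<in>F. g i) u 1 p) (fdelta (g x + (\<Sum>i\<in>F. g i)) u 1)"
    using req_sym[OF L_ladd[OF _ sF insert.prems(2)]] insert.prems by simp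
  ultimately show ?case using insert.hyps req_trans by simp
qed

lemma f_decomp: "finite {p. f p \<noteq> 0} \<Longrightarrow>
   f = (\<lambda>q. \<Sum>p\<in>{p. f p \<noteq> 0}. fdelta (fst p) (snd p) (f p) q)"
proof
  fix q assume fin: "finite {p. f p \<noteq> 0}"
  have "(\<Sum>p\<in>{p. f p \<noteq> 0}. fdelta (fst p) (snd p) (f p) q) = (\<Sum>p\<in>{p. f p \<noteq> 0}. if q = p then f p else 0)"
    by (intro sum.cong) (auto simp: fdelta_def)
  also have "\<dots> = f q" using fin by simp
  finally show "f q = (\<Sum>p\<in>{p. f p \<noteq> 0}. fdelta (fst p) (snd p) (f p) q)" by simp
qed

lemma normal:
  assumes W: "W \<subseteq> U" "M.subspace W" and f: "f \<in> free_space H W"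
  shows "\<exists>Eb k. finite Eb \<and> Eb \<subseteq> W \<and> \<not> M.dependent Eb \<and> (\<forall>e\<in>Eb. k e \<in> H) \<and>
     req f (\<lambda>q. \<Sum>e\<in>Eb. fdelta (k e) e 1 q)"
proof -
  define P where "P = {p. f p \<noteq> 0}"
  have fP: "finite P" and PHW: "P \<subseteq> H \<times> W" using f unfolding P_def free_space_def by auto
  define V where "V = snd ` P"
  have fV: "finite V" and VW: "V \<subseteq> W" using fP PHW unfolding V_def by auto
  obtain Eb where Eb: "Eb \<subseteq> V" "\<not> M.dependent Eb" "V \<subseteq> M.span Eb"
    using M.maximal_independent_subset[of V] by blast
  have fE: "finite Eb" using Eb(1) fV finite_subset by blast
  have EW: "Eb \<subseteq> W" using Eb(1) VW by blast
  have EU: "Eb \<subseteq> U" using EW W(1) by blast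
  have "\<forall>v\<in>V. \<exists>r. v = (\<Sum>e\<in>Eb. sm (r e) e)"
  proof
    fix v assume "v \<in> V"
    then have "v \<in> M.span Eb" using Eb(3) by blast
    then have "v \<in> range (\<lambda>u. \<Sum>e\<in>Eb. sm (u e) e)" by (simp only: M.span_finite[OF fE])
    then show "\<exists>r. v = (\<Sum>e\<in>Eb. sm (r e) e)" by blast
  qed
  from bchoice[OF this] obtain r where r: "\<And>v. v \<in> V \<Longrightarrow> v = (\<Sum>e\<in>Eb. sm (r v e) e)" by blast
  define G where "G p e = sm (r (snd p) e) (sm (f p) (fst p))" for p e
  have PH: "p \<in> P \<Longrightarrow> fst p \<in> H \<and> snd p \<in> W" for p using PHW by (auto simp: mem_Times_iff)
  have GH: "p \<in> P \<Longrightarrow> G p e \<in> H" for p e unfolding G_def using PH H_scale by simp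
  define k where "k e = (\<Sum>p\<in>P. G p e)" for e
  have kH: "k e \<in> H" for e unfolding k_def using GH by (intro H_sum) auto
  have trm: "req (fdelta (fst p) (snd p) (f p)) (\<lambda>q. \<Sum>e\<in>Eb. fdelta (G p e) e 1 q)" if p: "p \<in> P" for p
  proof -
    define h' where "h' = sm (f p) (fst p)"
    have pHW: "fst p \<in> H" "snd p \<in> W" using PH[OF p] by auto
    have h'H: "h' \<in> H" unfolding h'_def using pHW H_scale by simp
    have sU: "snd p \<in> U" using pHW W(1) by blast
    have sV: "snd p \<in> V" using p unfolding V_def by auto
    have 1: "req (fdelta (fst p) (snd p) (f p)) (fdelta h' (snd p) 1)"
      unfolding h'_def using L_lsm pHW(1) sU by blast
    have 2: "req (fdelta h' (snd p) 1) (\<lambda>q. \<Sum>e\<in>Eb. fdelta h' (sm (r (snd p) e) e) 1 q)"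
    proof -
      have s2a: "req (fdelta h' (\<Sum>e\<in>Eb. sm (r (snd p) e) e) 1) (\<lambda>q. \<Sum>e\<in>Eb. fdelta h' (sm (r (snd p) e) e) 1 q)"
        by (rule S1[OF fE _ h'H]) (use EU U_scale in blast)
      have eq: "fdelta h' (snd p) 1 = fdelta h' (\<Sum>e\<in>Eb. sm (r (snd p) e) e) 1"
        using r[OF sV] by (rule arg_cong)
      show ?thesis by (subst eq) (rule s2a)
    qed
    have 3: "req (\<lambda>q. \<Sum>e\<in>Eb. fdelta h' (sm (r (snd p) e) e) 1 q) (\<lambda>q. \<Sum>e\<in>Eb. fdelta h' e (r (snd p) e) q)"
      by (rule req_sum[OF fE]) (use L_rsm h'H EU in auto)
    have 4: "req (\<lambda>q. \<Sum>e\<in>Eb. fdelta h' e (r (snd p) e) q) (\<lambda>q. \<Sum>e\<in>Eb. fdelta (G p e) e 1 q)"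
    proof (rule req_sum[OF fE])
      fix e assume e: "e \<in> Eb"
      have "G p e = sm (r (snd p) e) h'" unfolding G_def h'_def ..
      then show "req (fdelta h' e (r (snd p) e)) (fdelta (G p e) e 1)" using L_lsm[OF h'H, of e] e EU by auto
    qed
    show ?thesis using req_trans[OF 1 req_trans[OF 2 req_trans[OF 3 4]]] .
  qed
  have A: "req f (\<lambda>q. \<Sum>p\<in>P. fdelta (fst p) (snd p) (f p) q)"
  proof -
    have "f = (\<lambda>q. \<Sum>p\<in>P. fdelta (fst p) (snd p) (f p) q)" unfolding P_def
      by (rule f_decomp) (use fP in \<open>simp add: P_def\<close>)
    then show ?thesis using req_refl[of f] by simp
  qed
  have B: "req (\<lambda>q. \<Sum>p\<in>P. fdelta (fst p) (snd p) (f p) q) (\<lambda>q. \<Sum>p\<in>P. \<Sum>e\<in>Eb. fdelta (G p e) e 1 q)"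
    using req_sum[OF fP trm] by simp
  have C: "(\<lambda>q. \<Sum>p\<in>P. \<Sum>e\<in>Eb. fdelta (G p e) e 1 q) = (\<lambda>q. \<Sum>e\<in>Eb. \<Sum>p\<in>P. fdelta (G p e) e 1 q)"
    by (rule ext, rule sum.swap)
  have D: "req (\<lambda>q. \<Sum>e\<in>Eb. \<Sum>p\<in>P. fdelta (G p e) e 1 q) (\<lambda>q. \<Sum>e\<in>Eb. fdelta (k e) e 1 q)"
  proof (rule req_sum[OF fE])
    fix e assume e: "e \<in> Eb"
    show "req (\<lambda>q. \<Sum>p\<in>P. fdelta (G p e) e 1 q) (fdelta (k e) e 1)"
      unfolding k_def by (rule S2[OF fP]) (use GH e EU in auto)
  qed
  have "req f (\<lambda>q. \<Sum>e\<in>Eb. fdelta (k e) e 1 q)" using req_trans[OF A req_trans[OF B[unfolded C] D]] .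
  then show ?thesis by (intro exI[of _ Eb] exI[of _ k]) (use fE EW Eb(2) kH in simp)
qed

end


context ctx begin

definition Gs :: "'m set \<Rightarrow> 'm set" where "Gs W = {beta h w | h w. h \<in> H \<and> w \<in> W}"

lemma span_stable:
  assumes W: "W \<subseteq> U" "\<And>x w. x \<in> a \<Longrightarrow> w \<in> W \<Longrightarrow> tau x w \<in> W"
    and m: "m \<in> M.span (Gs W)"
  shows "rho x m \<in> M.span (Gs W)"
  using m
proof (induction rule: M.span_induct_alt)
  case base then show ?case by (simp add: M.span_zero)
next
  case (step c g y)
  obtain h w where hw: "h \<in> H" "w \<in> W" "g = beta h w" using step(1) unfolding Gs_def by blast
  have wU: "w \<in> U" using hw W(1) by blast
  have "rho x g = beta (sigma x h) w + beta h (tau (sd_proj a b x) w)"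
    unfolding hw(3) by (rule main_eq[OF hw(1) wU])
  moreover have "beta (sigma x h) w \<in> Gs W" unfolding Gs_def using hw sig_in by blast
  moreover have "beta h (tau (sd_proj a b x) w) \<in> Gs W" unfolding Gs_def using hw W(2) sdp by blast
  ultimately have "rho x g \<in> M.span (Gs W)" by (simp add: M.span_add M.span_base)
  then show ?case using step(2) by (simp add: rho_add_v rho_scale_v M.span_add M.span_scale)
qed

lemma span_cases:
  assumes "W \<subseteq> U" "\<And>x w. x \<in> a \<Longrightarrow> w \<in> W \<Longrightarrow> tau x w \<in> W"
  shows "M.span (Gs W) = {0} \<or> M.span (Gs W) = UNIV"
  by (rule M_simple) (use span_stable[OF assms] in auto)

lemma fs_delta: "h \<in> H \<Longrightarrow> w \<in> W \<Longrightarrow> fdelta h w c \<in> free_space H W"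
  unfolding free_space_def using fin_delta[of h w c]
  by (auto simp: fdelta_def split: if_splits)

lemma fs_add: "f \<in> free_space H W \<Longrightarrow> g \<in> free_space H W \<Longrightarrow> (\<lambda>p. f p + g p) \<in> free_space H W"
proof -
  assume fg: "f \<in> free_space H W" "g \<in> free_space H W"
  have "{p. f p + g p \<noteq> 0} \<subseteq> {p. f p \<noteq> 0} \<union> {p. g p \<noteq> 0}" by auto
  moreover have "finite {p. f p + g p \<noteq> 0}" using fg fin_add unfolding free_space_def by blast
  ultimately show ?thesis using fg unfolding free_space_def by blast
qed

lemma fs_scale: "f \<in> free_space H W \<Longrightarrow> (\<lambda>p. c * f p) \<in> free_space H W"
proof -
  assume f: "f \<in> free_space H W"
  have "{p. c * f p \<noteq> 0} \<subseteq> {p. f p \<noteq> 0}" by auto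
  moreover have "finite {p. c * f p \<noteq> 0}" using f fin_scale unfolding free_space_def by blast
  ultimately show ?thesis using f unfolding free_space_def by blast
qed

lemma span_in_image: "M.span (Gs W) \<subseteq> E ` free_space H W"
proof (rule M.span_minimal)
  show "Gs W \<subseteq> E ` free_space H W"
  proof
    fix m assume "m \<in> Gs W"
    then obtain h w where hw: "h \<in> H" "w \<in> W" "m = beta h w" unfolding Gs_def by blast
    have "E (fdelta h w 1) = m" using hw(3) by (simp add: eval_delta)
    then show "m \<in> E ` free_space H W" using fs_delta[OF hw(1,2)] by blast
  qed
  show "M.subspace (E ` free_space H W)"
    unfolding M.subspace_def
  proof (intro conjI ballI allI)
    have "(\<lambda>p. 0) \<in> free_space H W" unfolding free_space_def by simp
    then show "0 \<in> E ` free_space H W" using eval_zero by (metis image_eqI)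
  next
    fix x y assume "x \<in> E ` free_space H W" "y \<in> E ` free_space H W"
    then obtain f g where fg: "f \<in> free_space H W" "g \<in> free_space H W" "x = E f" "y = E g" by blast
    have "E (\<lambda>p. f p + g p) = x + y" using fg eval_add[of f g beta] unfolding free_space_def by simp
    then show "x + y \<in> E ` free_space H W" using fs_add[OF fg(1,2)] by (metis image_eqI)
  next
    fix c x assume "x \<in> E ` free_space H W"
    then obtain f where f: "f \<in> free_space H W" "x = E f" by blast
    have "E (\<lambda>p. c * f p) = sm c x" using f eval_scale[of f beta c] unfolding free_space_def by simp
    then show "sm c x \<in> E ` free_space H W" using fs_scale[OF f(1)] by (metis image_eqI)
  qed
qed

lemma normal_eval:
  assumes W: "W \<subseteq> U" "M.subspace W" and f: "f \<in> free_space H W"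
  obtains Eb k where "finite Eb" "Eb \<subseteq> W" "\<not> M.dependent Eb" "\<forall>e\<in>Eb. k e \<in> H"
     "req f (\<lambda>q. \<Sum>e\<in>Eb. fdelta (k e) e 1 q)" "E f = (\<Sum>e\<in>Eb. beta (k e) e)"
proof -
  obtain Eb k where Ek: "finite Eb" "Eb \<subseteq> W" "\<not> M.dependent Eb" "\<forall>e\<in>Eb. k e \<in> H"
     "req f (\<lambda>q. \<Sum>e\<in>Eb. fdelta (k e) e 1 q)"
    using normal[OF W f] by blast
  define N where "N = (\<lambda>q. \<Sum>e\<in>Eb. fdelta (k e) e 1 q)"
  have finN: "finite {p. N p \<noteq> 0}" unfolding N_def by (rule fin_sum) (use Ek(1) fin_delta in auto)
  have finf: "finite {p. f p \<noteq> 0}" using f unfolding free_space_def by blast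
  have "(\<lambda>p. f p - N p) \<in> R" using Ek(5) unfolding req_def N_def .
  then have "E (\<lambda>p. f p - N p) = 0" using R_eval by blast
  then have "E f = E N" using eval_diff[OF finf finN] by simp
  also have "E N = (\<Sum>e\<in>Eb. E (fdelta (k e) e 1))" unfolding N_def
    by (rule eval_sum) (use Ek(1) fin_delta in auto)
  also have "\<dots> = (\<Sum>e\<in>Eb. beta (k e) e)" by (simp add: eval_delta)
  finally show ?thesis using that Ek by blast
qed

lemma tensor: "tensor_presentation sm sm sm H U UNIV beta"
  unfolding tensor_presentation_def
proof (intro conjI ballI)
  have "beta h0 h0 \<in> Gs U" unfolding Gs_def using h0H h0U by blast
  then have "h0 \<in> M.span (Gs U)" using h0U M.span_base by fastforce
  then have "M.span (Gs U) = UNIV" using span_cases[OF subset_refl tau_U] h0nz by auto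
  then show "E ` free_space H U = UNIV" using span_in_image[of U] by blast
next
  fix f assume f: "f \<in> free_space H U"
  show "E f = 0 \<longleftrightarrow> f \<in> R"
  proof
    assume E0: "E f = 0"
    obtain Eb k where Ek: "finite Eb" "Eb \<subseteq> U" "\<not> M.dependent Eb" "\<forall>e\<in>Eb. k e \<in> H"
     "req f (\<lambda>q. \<Sum>e\<in>Eb. fdelta (k e) e 1 q)" "E f = (\<Sum>e\<in>Eb. beta (k e) e)"
      using normal_eval[OF subset_refl U_sub f] by blast
    have k0: "\<forall>e\<in>Eb. k e = 0" using key[OF Ek(1-4)] Ek(6) E0 by simp
    have "req (\<lambda>q. \<Sum>e\<in>Eb. fdelta (k e) e 1 q) (\<lambda>q. \<Sum>e\<in>Eb. (\<lambda>p. 0) q)"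
      by (rule req_sum[OF Ek(1)]) (use k0 L_zl Ek(2) in auto)
    then have "req (\<lambda>q. \<Sum>e\<in>Eb. fdelta (k e) e 1 q) (\<lambda>q. 0)" by simp
    then have "(\<lambda>q. \<Sum>e\<in>Eb. fdelta (k e) e 1 q) \<in> R" using req_R rel_zero by blast
    then show "f \<in> R" using req_R[OF Ek(5)] by blast
  next
    assume "f \<in> R"
    then show "E f = 0" using R_eval by blast
  qed
qed

lemma U_simple: "simple_lie_module sg br a sm U tau"
  unfolding simple_lie_module_def
proof (intro conjI allI impI)
  show "lie_module sg br a sm U tau" by (rule tau_module)
  show "U \<noteq> {0}" using h0U h0nz by blast
  fix W assume WW: "W \<subseteq> U \<and> M.subspace W \<and> (\<forall>x\<in>a. \<forall>w\<in>W. tau x w \<in> W)"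
  then have WU: "W \<subseteq> U" and Ws: "M.subspace W" and Wt: "\<And>x w. x \<in> a \<Longrightarrow> w \<in> W \<Longrightarrow> tau x w \<in> W"
    by auto
  show "W = {0} \<or> W = U"
  proof (cases "M.span (Gs W) = {0}")
    case True
    have "W \<subseteq> {0}"
    proof
      fix w assume w: "w \<in> W"
      have "beta h0 w \<in> Gs W" unfolding Gs_def using h0H w by blast
      moreover have "beta h0 w = w" using w WU by auto
      ultimately have "w \<in> M.span (Gs W)" using M.span_base by metis
      then show "w \<in> {0}" using True by blast
    qed
    then show ?thesis using M.subspace_0[OF Ws] by blast
  next
    case False
    have "M.span (Gs W) = {0} \<or> M.span (Gs W) = UNIV"
      by (rule span_cases) (use WU Wt in auto)
    then have sp: "M.span (Gs W) = UNIV" using False by blast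
    have "U \<subseteq> W"
    proof
      fix u assume u: "u \<in> U"
      show "u \<in> W"
      proof (rule ccontr)
        assume uW: "u \<notin> W"
        have "u \<in> E ` free_space H W" using span_in_image[of W] unfolding sp by blast
        then obtain f where f: "f \<in> free_space H W" "u = E f" by blast
        obtain Eb k where Ek: "finite Eb" "Eb \<subseteq> W" "\<not> M.dependent Eb" "\<forall>e\<in>Eb. k e \<in> H"
          "req f (\<lambda>q. \<Sum>e\<in>Eb. fdelta (k e) e 1 q)" "E f = (\<Sum>e\<in>Eb. beta (k e) e)"
          by (rule normal_eval[OF WU Ws f(1)])
        have uE: "u \<notin> Eb" using uW Ek(2) by blast
        have "M.span Eb \<subseteq> W" using M.span_minimal[OF Ek(2) Ws] .
        then have "u \<notin> M.span Eb" using uW by blast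
        then have ind: "\<not> M.dependent (insert u Eb)" by (rule M.independent_insertI[OF _ Ek(3)])
        define k' where "k' = k(u := - h0)"
        have k'H: "\<forall>e\<in>insert u Eb. k' e \<in> H" using Ek(4) H_neg[OF h0H] unfolding k'_def by simp
        have s1: "(\<Sum>e\<in>insert u Eb. beta (k' e) e) = beta (k' u) u + (\<Sum>e\<in>Eb. beta (k' e) e)"
          by (rule sum.insert[OF Ek(1) uE])
        have s2: "(\<Sum>e\<in>Eb. beta (k' e) e) = (\<Sum>e\<in>Eb. beta (k e) e)"
          by (rule sum.cong) (use uE in \<open>auto simp: k'_def\<close>)
        have "(\<Sum>e\<in>insert u Eb. beta (k' e) e) = beta (- h0) u + (\<Sum>e\<in>Eb. beta (k e) e)"
          unfolding s1 s2 by (simp add: k'_def)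
        also have "\<dots> = 0" using beta_neg_l[OF u h0H] f(2) Ek(6) u by simp
        finally have s0: "(\<Sum>e\<in>insert u Eb. beta (k' e) e) = 0" .
        have fin': "finite (insert u Eb)" using Ek(1) by simp
        have sub': "insert u Eb \<subseteq> U" using Ek(2) WU u by blast
        have "\<forall>e\<in>insert u Eb. k' e = 0" by (rule key[OF fin' sub' ind k'H s0])
        then have "- h0 = 0" unfolding k'_def by simp
        then show False using h0nz by simp
      qed
    qed
    then show ?thesis using WU by blast
  qed
qed

end

theorem theorem2p13:
  fixes sg :: "complex \<Rightarrow> 'g::ab_group_add \<Rightarrow> 'g"
    and br :: "'g \<Rightarrow> 'g \<Rightarrow> 'g"
    and a b :: "'g set"
    and sm :: "complex \<Rightarrow> 'm::ab_group_add \<Rightarrow> 'm"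
    and rho :: "'g \<Rightarrow> 'm \<Rightarrow> 'm"
    and H :: "'m set"
    and sigma :: "'g \<Rightarrow> 'm \<Rightarrow> 'm"
  assumes "lie_algebra sg br"
    and "countable_dim sg UNIV"
    and "lie_subalgebra sg br a"
    and "lie_ideal sg br b"
    and "a \<inter> b = {0}"
    and "{x + y | x y. x \<in> a \<and> y \<in> b} = UNIV"
    and "vector_space sm"
    and "simple_lie_module sg br UNIV sm UNIV rho"
    and "simple_lie_module sg br b sm H rho"
    and "lie_module sg br UNIV sm H sigma"
    and "\<forall>x\<in>b. \<forall>h\<in>H. sigma x h = rho x h"
  shows "\<exists>(U :: 'm set) (tau :: 'g \<Rightarrow> 'm \<Rightarrow> 'm) (beta :: 'm \<Rightarrow> 'm \<Rightarrow> 'm).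
           simple_lie_module sg br a sm U tau \<and>
           tensor_presentation sm sm sm H U UNIV beta \<and>
           (\<forall>x. \<forall>h\<in>H. \<forall>u\<in>U.
              rho x (beta h u) = beta (sigma x h) u + beta h (tau (sd_proj a b x) u))"
proof -
  note A = assms
  have Gv: "vector_space sg" using A(1) unfolding lie_algebra_def by blast
  have Mv: "vector_space sm" by (rule A(7))
  have a_sub: "module.subspace sg a" using A(3) unfolding lie_subalgebra_def by blast
  have b_sub: "module.subspace sg b" and ideal: "\<forall>x. \<forall>y\<in>b. br x y \<in> b"
    using A(4) unfolding lie_ideal_def by blast+
  have decomp: "\<exists>y z. y \<in> a \<and> z \<in> b \<and> x = y + z" for x
  proof -
    have "x \<in> {x + y | x y. x \<in> a \<and> y \<in> b}" using A(6) by simp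
    then show ?thesis by blast
  qed
  have cdim: "\<exists>B. countable B \<and> module.span sg B = UNIV" using A(2) unfolding countable_dim_def by blast
  have Mrho: "lie_module sg br UNIV sm UNIV rho"
    and Msimp: "\<forall>W. W \<subseteq> UNIV \<and> module.subspace sm W \<and> (\<forall>x\<in>UNIV. \<forall>w\<in>W. rho x w \<in> W) \<longrightarrow> W = {0} \<or> W = UNIV"
    using A(8) unfolding simple_lie_module_def by blast+
  have Hmod: "lie_module sg br b sm H rho" and Hnz: "H \<noteq> {0}"
    and Hsimp: "\<forall>W. W \<subseteq> H \<and> module.subspace sm W \<and> (\<forall>x\<in>b. \<forall>w\<in>W. rho x w \<in> W) \<longrightarrow> W = {0} \<or> W = H"
    using A(9) unfolding simple_lie_module_def by blast+
  have R: "\<And>x y v. rho (x + y) v = rho x v + rho y v" "\<And>c x v. rho (sg c x) v = sm c (rho x v)"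
    "\<And>x v w. rho x (v + w) = rho x v + rho x w" "\<And>c x v. rho x (sm c v) = sm c (rho x v)"
    "\<And>x y v. rho (br x y) v = rho x (rho y v) - rho y (rho x v)"
    using Mrho unfolding lie_module_def by blast+
  have Hs: "module.subspace sm H" "\<And>x h. x \<in> b \<Longrightarrow> h \<in> H \<Longrightarrow> rho x h \<in> H"
    using Hmod unfolding lie_module_def by blast+
  have S: "\<And>x h. h \<in> H \<Longrightarrow> sigma x h \<in> H"
    "\<And>x y h. h \<in> H \<Longrightarrow> sigma (x + y) h = sigma x h + sigma y h"
    "\<And>c x h. h \<in> H \<Longrightarrow> sigma (sg c x) h = sm c (sigma x h)"
    "\<And>x h h'. h \<in> H \<Longrightarrow> h' \<in> H \<Longrightarrow> sigma x (h + h') = sigma x h + sigma x h'"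
    "\<And>c x h. h \<in> H \<Longrightarrow> sigma x (sm c h) = sm c (sigma x h)"
    "\<And>x y h. h \<in> H \<Longrightarrow> sigma (br x y) h = sigma x (sigma y h) - sigma y (sigma x h)"
    using A(10) unfolding lie_module_def by blast+
  have "0 \<in> H" using module.subspace_0[OF Mv[folded module_iff_vector_space] Hs(1)] .
  then obtain h0 where h0: "h0 \<in> H" "h0 \<noteq> 0" using Hnz by blast
  have "ctx sg sm br a b rho H sigma h0"
  proof (intro ctx.intro ctx_axioms.intro)
    show "vector_space sg" by (rule Gv)
    show "vector_space sm" by (rule Mv)
    show "module.subspace sg a" by (rule a_sub)
    show "module.subspace sg b" by (rule b_sub)
    show "\<And>x y. y \<in> b \<Longrightarrow> br x y \<in> b" using ideal by blast
    show "a \<inter> b = {0}" by (rule A(5))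
    show "\<And>x. \<exists>y z. y \<in> a \<and> z \<in> b \<and> x = y + z" by (rule decomp)
    show "\<exists>B. countable B \<and> module.span sg B = UNIV" by (rule cdim)
    show "\<And>x y v. rho (x + y) v = rho x v + rho y v" by (rule R(1))
    show "\<And>c x v. rho (sg c x) v = sm c (rho x v)" by (rule R(2))
    show "\<And>x v w. rho x (v + w) = rho x v + rho x w" by (rule R(3))
    show "\<And>c x v. rho x (sm c v) = sm c (rho x v)" by (rule R(4))
    show "\<And>x y v. rho (br x y) v = rho x (rho y v) - rho y (rho x v)" by (rule R(5))
    show "\<And>W. module.subspace sm W \<Longrightarrow> (\<And>x w. w \<in> W \<Longrightarrow> rho x w \<in> W) \<Longrightarrow> W = {0} \<or> W = UNIV"
      using Msimp by blast
    show "module.subspace sm H" by (rule Hs(1))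
    show "\<And>x h. x \<in> b \<Longrightarrow> h \<in> H \<Longrightarrow> rho x h \<in> H" by (rule Hs(2))
    show "\<And>W. W \<subseteq> H \<Longrightarrow> module.subspace sm W \<Longrightarrow> (\<And>x w. x \<in> b \<Longrightarrow> w \<in> W \<Longrightarrow> rho x w \<in> W)
                     \<Longrightarrow> W = {0} \<or> W = H" using Hsimp by blast
    show "\<And>x h. h \<in> H \<Longrightarrow> sigma x h \<in> H" by (rule S(1))
    show "\<And>x y h. h \<in> H \<Longrightarrow> sigma (x + y) h = sigma x h + sigma y h" by (rule S(2))
    show "\<And>c x h. h \<in> H \<Longrightarrow> sigma (sg c x) h = sm c (sigma x h)" by (rule S(3))
    show "\<And>x h h'. h \<in> H \<Longrightarrow> h' \<in> H \<Longrightarrow> sigma x (h + h') = sigma x h + sigma x h'" by (rule S(4))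
    show "\<And>c x h. h \<in> H \<Longrightarrow> sigma x (sm c h) = sm c (sigma x h)" by (rule S(5))
    show "\<And>x y h. h \<in> H \<Longrightarrow> sigma (br x y) h = sigma x (sigma y h) - sigma y (sigma x h)" by (rule S(6))
    show "\<And>x h. x \<in> b \<Longrightarrow> h \<in> H \<Longrightarrow> sigma x h = rho x h" using A(11) by blast
    show "h0 \<in> H" "h0 \<noteq> 0" by (rule h0)+
  qed
  then interpret C: ctx sg sm br a b rho H sigma h0 .
  show ?thesis
    apply (intro exI[of _ C.U] exI[of _ C.tau] exI[of _ C.beta] conjI)
    using C.U_simple C.tensor C.main_eq by auto
qed


end
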